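(* Let $A$ be an annihilator locally $C^{\ast}$-algebra and $I$ a closed two-sided ideal of $A$. Then $I$ and $A/I$ are annihilator locally $C^{\ast}$-algebras, and $A$ is topologically ${}^{\ast}$-isomorphic to the Cartesian product $I\times A/I$.
   Context: Locally $C^{\ast}$-algebra: complete Hausdorff locally convex ${}^{\ast}$-algebra over $\mathbb{C}$ with jointly continuous multiplication, topology given by $C^{\ast}$-seminorms. Annihilator algebra: for every closed left ideal $J$ and closed right ideal $K$, $\mathrm{ran}(J)=0\iff J=A$ and $\mathrm{lan}(K)=0\iff K=A$, where $\mathrm{lan}(S)=\{a:aS=0\}$, $\mathrm{ran}(S)=\{a:Sa=0\}$. *)

theory Defs
  imports "HOL-Analysis.Analysis"
begin

record 'a lcs_alg =
  lcarrier :: "'a set"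
  lzero    :: 'a
  ladd     :: "'a \<Rightarrow> 'a \<Rightarrow> 'a"
  lsmult   :: "complex \<Rightarrow> 'a \<Rightarrow> 'a"
  lmult    :: "'a \<Rightarrow> 'a \<Rightarrow> 'a"
  lstar    :: "'a \<Rightarrow> 'a"
  lsemis   :: "('a \<Rightarrow> real) set"

definition lsub :: "'a lcs_alg \<Rightarrow> 'a \<Rightarrow> 'a \<Rightarrow> 'a" where
  "lsub A x y = ladd A x (lsmult A (-1) y)"

definition lcs_open :: "'a lcs_alg \<Rightarrow> 'a set \<Rightarrow> bool" where
  "lcs_open A U \<longleftrightarrow> U \<subseteq> lcarrier A \<and>
     (\<forall>x\<in>U. \<exists>F e. finite F \<and> F \<subseteq> lsemis A \<and> e > 0 \<and>
        {y \<in> lcarrier A. \<forall>p\<in>F. p (lsub A y x) < e} \<subseteq> U)"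

definition sball :: "'a lcs_alg \<Rightarrow> ('a \<Rightarrow> real) set \<Rightarrow> real \<Rightarrow> 'a \<Rightarrow> 'a set" where
  "sball A F e x = {y \<in> lcarrier A. \<forall>p\<in>F. p (lsub A y x) < e}"
lemma lcs_open_alt: "lcs_open A U \<longleftrightarrow> U \<subseteq> lcarrier A \<and>
     (\<forall>x\<in>U. \<exists>F e. finite F \<and> F \<subseteq> lsemis A \<and> e > 0 \<and> sball A F e x \<subseteq> U)"
  unfolding lcs_open_def sball_def by simp
lemma sball_mono: "F \<subseteq> G \<Longrightarrow> e' \<le> e \<Longrightarrow> sball A G e' x \<subseteq> sball A F e x"
  unfolding sball_def by force
lemma istopology_lcs_open: "istopology (lcs_open A)"
  unfolding istopology_def
proof (intro conjI allI impI)
  fix S T assume S: "lcs_open A S" and T: "lcs_open A T"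
  show "lcs_open A (S \<inter> T)"
    unfolding lcs_open_alt
  proof (intro conjI ballI)
    show "S \<inter> T \<subseteq> lcarrier A" using S unfolding lcs_open_alt by blast
  next
    fix x assume x: "x \<in> S \<inter> T"
    obtain F1 e1 where 1: "finite F1" "F1 \<subseteq> lsemis A" "e1 > 0" "sball A F1 e1 x \<subseteq> S"
      using S x unfolding lcs_open_alt by blast
    obtain F2 e2 where 2: "finite F2" "F2 \<subseteq> lsemis A" "e2 > 0" "sball A F2 e2 x \<subseteq> T"
      using T x unfolding lcs_open_alt by blast
    have "sball A (F1 \<union> F2) (min e1 e2) x \<subseteq> sball A F1 e1 x"
      by (rule sball_mono) auto
    moreover have "sball A (F1 \<union> F2) (min e1 e2) x \<subseteq> sball A F2 e2 x"
      by (rule sball_mono) auto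
    ultimately have "sball A (F1 \<union> F2) (min e1 e2) x \<subseteq> S \<inter> T"
      using 1(4) 2(4) by blast
    moreover have "finite (F1 \<union> F2)" "F1 \<union> F2 \<subseteq> lsemis A" "min e1 e2 > 0"
      using 1 2 by auto
    ultimately show "\<exists>F e. finite F \<and> F \<subseteq> lsemis A \<and> e > 0 \<and> sball A F e x \<subseteq> S \<inter> T"
      by blast
  qed
next
  fix K assume K: "\<forall>S\<in>K. lcs_open A S"
  show "lcs_open A (\<Union>K)"
    unfolding lcs_open_alt
  proof (intro conjI ballI)
    show "\<Union>K \<subseteq> lcarrier A" using K unfolding lcs_open_alt by blast
  next
    fix x assume "x \<in> \<Union>K"
    then obtain S where S: "S \<in> K" "x \<in> S" by blast
    then have "lcs_open A S" using K by blast
    then obtain F e where "finite F" "F \<subseteq> lsemis A" "e > 0" "sball A F e x \<subseteq> S"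
      using S(2) unfolding lcs_open_alt by blast
    moreover have "S \<subseteq> \<Union>K" using S(1) by blast
    ultimately show "\<exists>F e. finite F \<and> F \<subseteq> lsemis A \<and> e > 0 \<and> sball A F e x \<subseteq> \<Union>K"
      by blast
  qed
qed

definition lcs_topology :: "'a lcs_alg \<Rightarrow> 'a topology" where
  "lcs_topology A = topology (lcs_open A)"

definition star_alg :: "'a lcs_alg \<Rightarrow> bool" where
  "star_alg A \<longleftrightarrow>
    lzero A \<in> lcarrier A \<and>
    (\<forall>x\<in>lcarrier A. \<forall>y\<in>lcarrier A. ladd A x y \<in> lcarrier A) \<and>
    (\<forall>x\<in>lcarrier A. \<forall>y\<in>lcarrier A. lmult A x y \<in> lcarrier A) \<and>
    (\<forall>c. \<forall>x\<in>lcarrier A. lsmult A c x \<in> lcarrier A) \<and>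
    (\<forall>x\<in>lcarrier A. lstar A x \<in> lcarrier A) \<and>
    (\<forall>x\<in>lcarrier A. \<forall>y\<in>lcarrier A. \<forall>z\<in>lcarrier A.
        ladd A (ladd A x y) z = ladd A x (ladd A y z)) \<and>
    (\<forall>x\<in>lcarrier A. \<forall>y\<in>lcarrier A. ladd A x y = ladd A y x) \<and>
    (\<forall>x\<in>lcarrier A. ladd A (lzero A) x = x) \<and>
    (\<forall>x\<in>lcarrier A. ladd A x (lsmult A (-1) x) = lzero A) \<and>
    (\<forall>x\<in>lcarrier A. lsmult A 1 x = x) \<and>
    (\<forall>a b. \<forall>x\<in>lcarrier A. lsmult A a (lsmult A b x) = lsmult A (a * b) x) \<and>
    (\<forall>a b. \<forall>x\<in>lcarrier A. lsmult A (a + b) x = ladd A (lsmult A a x) (lsmult A b x)) \<and>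
    (\<forall>a. \<forall>x\<in>lcarrier A. \<forall>y\<in>lcarrier A.
        lsmult A a (ladd A x y) = ladd A (lsmult A a x) (lsmult A a y)) \<and>
    (\<forall>x\<in>lcarrier A. \<forall>y\<in>lcarrier A. \<forall>z\<in>lcarrier A.
        lmult A (lmult A x y) z = lmult A x (lmult A y z)) \<and>
    (\<forall>x\<in>lcarrier A. \<forall>y\<in>lcarrier A. \<forall>z\<in>lcarrier A.
        lmult A (ladd A x y) z = ladd A (lmult A x z) (lmult A y z)) \<and>
    (\<forall>x\<in>lcarrier A. \<forall>y\<in>lcarrier A. \<forall>z\<in>lcarrier A.
        lmult A x (ladd A y z) = ladd A (lmult A x y) (lmult A x z)) \<and>
    (\<forall>c. \<forall>x\<in>lcarrier A. \<forall>y\<in>lcarrier A.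
        lsmult A c (lmult A x y) = lmult A (lsmult A c x) y \<and>
        lsmult A c (lmult A x y) = lmult A x (lsmult A c y)) \<and>
    (\<forall>x\<in>lcarrier A. lstar A (lstar A x) = x) \<and>
    (\<forall>x\<in>lcarrier A. \<forall>y\<in>lcarrier A. lstar A (ladd A x y) = ladd A (lstar A x) (lstar A y)) \<and>
    (\<forall>c. \<forall>x\<in>lcarrier A. lstar A (lsmult A c x) = lsmult A (cnj c) (lstar A x)) \<and>
    (\<forall>x\<in>lcarrier A. \<forall>y\<in>lcarrier A. lstar A (lmult A x y) = lmult A (lstar A y) (lstar A x))"

definition cstar_seminorm :: "'a lcs_alg \<Rightarrow> ('a \<Rightarrow> real) \<Rightarrow> bool" where
  "cstar_seminorm A p \<longleftrightarrow>
    (\<forall>x\<in>lcarrier A. p x \<ge> 0) \<and>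
    (\<forall>x\<in>lcarrier A. \<forall>y\<in>lcarrier A. p (ladd A x y) \<le> p x + p y) \<and>
    (\<forall>c. \<forall>x\<in>lcarrier A. p (lsmult A c x) = cmod c * p x) \<and>
    (\<forall>x\<in>lcarrier A. \<forall>y\<in>lcarrier A. p (lmult A x y) \<le> p x * p y) \<and>
    (\<forall>x\<in>lcarrier A. p (lmult A (lstar A x) x) = (p x)\<^sup>2)"

text \<open>Locally C*-algebra: complete Hausdorff, topology given by the C*-seminorms
  (joint continuity of multiplication follows from submultiplicativity).
  Completeness is expressed with Cauchy filters (equivalent to Cauchy nets).\<close>
definition locally_cstar :: "'a lcs_alg \<Rightarrow> bool" where
  "locally_cstar A \<longleftrightarrow> star_alg A \<and>
    (\<forall>p\<in>lsemis A. cstar_seminorm A p) \<and>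
    (\<forall>x\<in>lcarrier A. (\<forall>p\<in>lsemis A. p x = 0) \<longrightarrow> x = lzero A) \<and>
    (\<forall>F. F \<noteq> bot \<longrightarrow> eventually (\<lambda>x. x \<in> lcarrier A) F \<longrightarrow>
       (\<forall>p\<in>lsemis A. \<forall>e>0. eventually (\<lambda>(x,y). p (lsub A x y) < e) (F \<times>\<^sub>F F)) \<longrightarrow>
       (\<exists>x\<in>lcarrier A. \<forall>p\<in>lsemis A. \<forall>e>0. eventually (\<lambda>y. p (lsub A y x) < e) F))"

definition subspace_l :: "'a lcs_alg \<Rightarrow> 'a set \<Rightarrow> bool" where
  "subspace_l A J \<longleftrightarrow> J \<subseteq> lcarrier A \<and> lzero A \<in> J \<and>
     (\<forall>x\<in>J. \<forall>y\<in>J. ladd A x y \<in> J) \<and> (\<forall>c. \<forall>x\<in>J. lsmult A c x \<in> J)"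

definition closed_left_ideal :: "'a lcs_alg \<Rightarrow> 'a set \<Rightarrow> bool" where
  "closed_left_ideal A J \<longleftrightarrow> subspace_l A J \<and>
     (\<forall>a\<in>lcarrier A. \<forall>x\<in>J. lmult A a x \<in> J) \<and> closedin (lcs_topology A) J"

definition closed_right_ideal :: "'a lcs_alg \<Rightarrow> 'a set \<Rightarrow> bool" where
  "closed_right_ideal A J \<longleftrightarrow> subspace_l A J \<and>
     (\<forall>a\<in>lcarrier A. \<forall>x\<in>J. lmult A x a \<in> J) \<and> closedin (lcs_topology A) J"

definition closed_ideal :: "'a lcs_alg \<Rightarrow> 'a set \<Rightarrow> bool" where
  "closed_ideal A J \<longleftrightarrow> closed_left_ideal A J \<and> closed_right_ideal A J"

definition lan :: "'a lcs_alg \<Rightarrow> 'a set \<Rightarrow> 'a set" where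
  "lan A S = {a \<in> lcarrier A. \<forall>s\<in>S. lmult A a s = lzero A}"

definition ran :: "'a lcs_alg \<Rightarrow> 'a set \<Rightarrow> 'a set" where
  "ran A S = {a \<in> lcarrier A. \<forall>s\<in>S. lmult A s a = lzero A}"

definition annihilator_alg :: "'a lcs_alg \<Rightarrow> bool" where
  "annihilator_alg A \<longleftrightarrow>
    (\<forall>J. closed_left_ideal A J \<longrightarrow> (ran A J = {lzero A} \<longleftrightarrow> J = lcarrier A)) \<and>
    (\<forall>K. closed_right_ideal A K \<longrightarrow> (lan A K = {lzero A} \<longleftrightarrow> K = lcarrier A))"

definition annihilator_locally_cstar :: "'a lcs_alg \<Rightarrow> bool" where
  "annihilator_locally_cstar A \<longleftrightarrow> locally_cstar A \<and> annihilator_alg A"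

definition sub_alg :: "'a lcs_alg \<Rightarrow> 'a set \<Rightarrow> 'a lcs_alg" where
  "sub_alg A I = A\<lparr>lcarrier := I\<rparr>"

definition coset_l :: "'a lcs_alg \<Rightarrow> 'a set \<Rightarrow> 'a \<Rightarrow> 'a set" where
  "coset_l A I x = {ladd A x i | i. i \<in> I}"

definition rep_l :: "'a set \<Rightarrow> 'a" where
  "rep_l X = (SOME x. x \<in> X)"

definition quot_alg :: "'a lcs_alg \<Rightarrow> 'a set \<Rightarrow> 'a set lcs_alg" where
  "quot_alg A I = \<lparr>
     lcarrier = coset_l A I ` lcarrier A,
     lzero = coset_l A I (lzero A),
     ladd = (\<lambda>X Y. coset_l A I (ladd A (rep_l X) (rep_l Y))),
     lsmult = (\<lambda>c X. coset_l A I (lsmult A c (rep_l X))),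
     lmult = (\<lambda>X Y. coset_l A I (lmult A (rep_l X) (rep_l Y))),
     lstar = (\<lambda>X. coset_l A I (lstar A (rep_l X))),
     lsemis = {(\<lambda>X. Inf (p ` X)) | p. p \<in> lsemis A} \<rparr>"

definition prod_alg :: "'a lcs_alg \<Rightarrow> 'b lcs_alg \<Rightarrow> ('a \<times> 'b) lcs_alg" where
  "prod_alg A B = \<lparr>
     lcarrier = lcarrier A \<times> lcarrier B,
     lzero = (lzero A, lzero B),
     ladd = (\<lambda>x y. (ladd A (fst x) (fst y), ladd B (snd x) (snd y))),
     lsmult = (\<lambda>c x. (lsmult A c (fst x), lsmult B c (snd x))),
     lmult = (\<lambda>x y. (lmult A (fst x) (fst y), lmult B (snd x) (snd y))),
     lstar = (\<lambda>x. (lstar A (fst x), lstar B (snd x))),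
     lsemis = {(\<lambda>z. p (fst z)) | p. p \<in> lsemis A} \<union> {(\<lambda>z. q (snd z)) | q. q \<in> lsemis B} \<rparr>"

definition top_star_iso :: "'a lcs_alg \<Rightarrow> 'b lcs_alg \<Rightarrow> ('a \<Rightarrow> 'b) \<Rightarrow> bool" where
  "top_star_iso A B f \<longleftrightarrow>
    bij_betw f (lcarrier A) (lcarrier B) \<and>
    (\<forall>x\<in>lcarrier A. \<forall>y\<in>lcarrier A. f (ladd A x y) = ladd B (f x) (f y)) \<and>
    (\<forall>c. \<forall>x\<in>lcarrier A. f (lsmult A c x) = lsmult B c (f x)) \<and>
    (\<forall>x\<in>lcarrier A. \<forall>y\<in>lcarrier A. f (lmult A x y) = lmult B (f x) (f y)) \<and>
    (\<forall>x\<in>lcarrier A. f (lstar A x) = lstar B (f x)) \<and>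
    homeomorphic_map (lcs_topology A) (lcs_topology B) f"

end

theory Submission
  imports Defs
begin

locale SA =
  fixes A :: "'a lcs_alg"
  assumes sa: "star_alg A"
begin

abbreviation "Cr \<equiv> lcarrier A"
abbreviation "z \<equiv> lzero A"
abbreviation "add \<equiv> ladd A"
abbreviation "mul \<equiv> lmult A"
abbreviation "sm \<equiv> lsmult A"
abbreviation "st \<equiv> lstar A"
abbreviation "sub \<equiv> lsub A"
abbreviation "neg x \<equiv> lsmult A (-1) x"

lemmas saP = sa[unfolded star_alg_def]
lemmas sa_0 = saP[THEN conjunct1]
lemmas sa_1 = saP[THEN conjunct2, THEN conjunct1]
lemmas sa_2 = saP[THEN conjunct2, THEN conjunct2, THEN conjunct1]
lemmas sa_3 = saP[THEN conjunct2, THEN conjunct2, THEN conjunct2, THEN conjunct1]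
lemmas sa_4 = saP[THEN conjunct2, THEN conjunct2, THEN conjunct2, THEN conjunct2, THEN conjunct1]
lemmas sa_5 = saP[THEN conjunct2, THEN conjunct2, THEN conjunct2, THEN conjunct2, THEN conjunct2, THEN conjunct1]
lemmas sa_6 = saP[THEN conjunct2, THEN conjunct2, THEN conjunct2, THEN conjunct2, THEN conjunct2, THEN conjunct2, THEN conjunct1]
lemmas sa_7 = saP[THEN conjunct2, THEN conjunct2, THEN conjunct2, THEN conjunct2, THEN conjunct2, THEN conjunct2, THEN conjunct2, THEN conjunct1]
lemmas sa_8 = saP[THEN conjunct2, THEN conjunct2, THEN conjunct2, THEN conjunct2, THEN conjunct2, THEN conjunct2, THEN conjunct2, THEN conjunct2, THEN conjunct1]
lemmas sa_9 = saP[THEN conjunct2, THEN conjunct2, THEN conjunct2, THEN conjunct2, THEN conjunct2, THEN conjunct2, THEN conjunct2, THEN conjunct2, THEN conjunct2, THEN conjunct1]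
lemmas sa_10 = saP[THEN conjunct2, THEN conjunct2, THEN conjunct2, THEN conjunct2, THEN conjunct2, THEN conjunct2, THEN conjunct2, THEN conjunct2, THEN conjunct2, THEN conjunct2, THEN conjunct1]
lemmas sa_11 = saP[THEN conjunct2, THEN conjunct2, THEN conjunct2, THEN conjunct2, THEN conjunct2, THEN conjunct2, THEN conjunct2, THEN conjunct2, THEN conjunct2, THEN conjunct2, THEN conjunct2, THEN conjunct1]
lemmas sa_12 = saP[THEN conjunct2, THEN conjunct2, THEN conjunct2, THEN conjunct2, THEN conjunct2, THEN conjunct2, THEN conjunct2, THEN conjunct2, THEN conjunct2, THEN conjunct2, THEN conjunct2, THEN conjunct2, THEN conjunct1]
lemmas sa_13 = saP[THEN conjunct2, THEN conjunct2, THEN conjunct2, THEN conjunct2, THEN conjunct2, THEN conjunct2, THEN conjunct2, THEN conjunct2, THEN conjunct2, THEN conjunct2, THEN conjunct2, THEN conjunct2, THEN conjunct2, THEN conjunct1]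
lemmas sa_14 = saP[THEN conjunct2, THEN conjunct2, THEN conjunct2, THEN conjunct2, THEN conjunct2, THEN conjunct2, THEN conjunct2, THEN conjunct2, THEN conjunct2, THEN conjunct2, THEN conjunct2, THEN conjunct2, THEN conjunct2, THEN conjunct2, THEN conjunct1]
lemmas sa_15 = saP[THEN conjunct2, THEN conjunct2, THEN conjunct2, THEN conjunct2, THEN conjunct2, THEN conjunct2, THEN conjunct2, THEN conjunct2, THEN conjunct2, THEN conjunct2, THEN conjunct2, THEN conjunct2, THEN conjunct2, THEN conjunct2, THEN conjunct2, THEN conjunct1]
lemmas sa_16 = saP[THEN conjunct2, THEN conjunct2, THEN conjunct2, THEN conjunct2, THEN conjunct2, THEN conjunct2, THEN conjunct2, THEN conjunct2, THEN conjunct2, THEN conjunct2, THEN conjunct2, THEN conjunct2, THEN conjunct2, THEN conjunct2, THEN conjunct2, THEN conjunct2, THEN conjunct1]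
lemmas sa_17 = saP[THEN conjunct2, THEN conjunct2, THEN conjunct2, THEN conjunct2, THEN conjunct2, THEN conjunct2, THEN conjunct2, THEN conjunct2, THEN conjunct2, THEN conjunct2, THEN conjunct2, THEN conjunct2, THEN conjunct2, THEN conjunct2, THEN conjunct2, THEN conjunct2, THEN conjunct2, THEN conjunct1]
lemmas sa_18 = saP[THEN conjunct2, THEN conjunct2, THEN conjunct2, THEN conjunct2, THEN conjunct2, THEN conjunct2, THEN conjunct2, THEN conjunct2, THEN conjunct2, THEN conjunct2, THEN conjunct2, THEN conjunct2, THEN conjunct2, THEN conjunct2, THEN conjunct2, THEN conjunct2, THEN conjunct2, THEN conjunct2, THEN conjunct1]
lemmas sa_19 = saP[THEN conjunct2, THEN conjunct2, THEN conjunct2, THEN conjunct2, THEN conjunct2, THEN conjunct2, THEN conjunct2, THEN conjunct2, THEN conjunct2, THEN conjunct2, THEN conjunct2, THEN conjunct2, THEN conjunct2, THEN conjunct2, THEN conjunct2, THEN conjunct2, THEN conjunct2, THEN conjunct2, THEN conjunct2, THEN conjunct1]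
lemmas sa_20 = saP[THEN conjunct2, THEN conjunct2, THEN conjunct2, THEN conjunct2, THEN conjunct2, THEN conjunct2, THEN conjunct2, THEN conjunct2, THEN conjunct2, THEN conjunct2, THEN conjunct2, THEN conjunct2, THEN conjunct2, THEN conjunct2, THEN conjunct2, THEN conjunct2, THEN conjunct2, THEN conjunct2, THEN conjunct2, THEN conjunct2]

lemma zero_closed[simp]: "z \<in> Cr" by (fact sa_0[rule_format])
lemma add_closed[simp]: "x \<in> Cr \<Longrightarrow> y \<in> Cr \<Longrightarrow> add x y \<in> Cr" by (fact sa_1[rule_format])
lemma mul_closed[simp]: "x \<in> Cr \<Longrightarrow> y \<in> Cr \<Longrightarrow> mul x y \<in> Cr" by (fact sa_2[rule_format])
lemma sm_closed[simp]: "x \<in> Cr \<Longrightarrow> sm c x \<in> Cr" by (fact sa_3[rule_format])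
lemma st_closed[simp]: "x \<in> Cr \<Longrightarrow> st x \<in> Cr" by (fact sa_4[rule_format])
lemma add_assoc: "x \<in> Cr \<Longrightarrow> y \<in> Cr \<Longrightarrow> w \<in> Cr \<Longrightarrow> add (add x y) w = add x (add y w)" by (fact sa_5[rule_format])
lemma add_comm: "x \<in> Cr \<Longrightarrow> y \<in> Cr \<Longrightarrow> add x y = add y x" by (fact sa_6[rule_format])
lemma add_zero_left[simp]: "x \<in> Cr \<Longrightarrow> add z x = x" by (fact sa_7[rule_format])
lemma add_neg: "x \<in> Cr \<Longrightarrow> add x (neg x) = z" by (fact sa_8[rule_format])
lemma sm_one[simp]: "x \<in> Cr \<Longrightarrow> sm 1 x = x" by (fact sa_9[rule_format])
lemma sm_sm[simp]: "x \<in> Cr \<Longrightarrow> sm a (sm b x) = sm (a*b) x" by (fact sa_10[rule_format])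
lemma sm_add_scalar: "x \<in> Cr \<Longrightarrow> sm (a+b) x = add (sm a x) (sm b x)" by (fact sa_11[rule_format])
lemma sm_add: "x \<in> Cr \<Longrightarrow> y \<in> Cr \<Longrightarrow> sm a (add x y) = add (sm a x) (sm a y)" by (fact sa_12[rule_format])
lemma mul_assoc: "x \<in> Cr \<Longrightarrow> y \<in> Cr \<Longrightarrow> w \<in> Cr \<Longrightarrow> mul (mul x y) w = mul x (mul y w)" by (fact sa_13[rule_format])
lemma distr_r: "x \<in> Cr \<Longrightarrow> y \<in> Cr \<Longrightarrow> w \<in> Cr \<Longrightarrow> mul (add x y) w = add (mul x w) (mul y w)" by (fact sa_14[rule_format])
lemma distr_l: "x \<in> Cr \<Longrightarrow> y \<in> Cr \<Longrightarrow> w \<in> Cr \<Longrightarrow> mul x (add y w) = add (mul x y) (mul x w)" by (fact sa_15[rule_format])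
lemma sm_mul_l: "x \<in> Cr \<Longrightarrow> y \<in> Cr \<Longrightarrow> mul (sm c x) y = sm c (mul x y)" using sa_16[rule_format, THEN conjunct1, symmetric] .
lemma sm_mul_r: "x \<in> Cr \<Longrightarrow> y \<in> Cr \<Longrightarrow> mul x (sm c y) = sm c (mul x y)" using sa_16[rule_format, THEN conjunct2, symmetric] .
lemma st_st[simp]: "x \<in> Cr \<Longrightarrow> st (st x) = x" by (fact sa_17[rule_format])
lemma st_add: "x \<in> Cr \<Longrightarrow> y \<in> Cr \<Longrightarrow> st (add x y) = add (st x) (st y)" by (fact sa_18[rule_format])
lemma st_sm: "x \<in> Cr \<Longrightarrow> st (sm c x) = sm (cnj c) (st x)" by (fact sa_19[rule_format])
lemma st_mul: "x \<in> Cr \<Longrightarrow> y \<in> Cr \<Longrightarrow> st (mul x y) = mul (st y) (st x)" by (fact sa_20[rule_format])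

lemma add_zero_right[simp]: "x \<in> Cr \<Longrightarrow> add x z = x" using add_comm[of x z] by simp
lemma neg_add: "x \<in> Cr \<Longrightarrow> add (neg x) x = z" using add_neg[of x] add_comm[of "neg x" x] by simp
lemma add_left_cancel: assumes "x \<in> Cr" "y \<in> Cr" "w \<in> Cr" "add x y = add x w" shows "y = w"
proof -
  have "y = add (add (neg x) x) y" using assms by (simp add: neg_add)
  also have "\<dots> = add (neg x) (add x y)" using assms by (simp add: add_assoc)
  also have "\<dots> = add (neg x) (add x w)" using assms by simp
  also have "\<dots> = add (add (neg x) x) w" using assms by (simp add: add_assoc)
  also have "\<dots> = w" using assms by (simp add: neg_add)
  finally show ?thesis .
qed
lemma sm_zero_scalar[simp]: assumes "x \<in> Cr" shows "sm 0 x = z"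
proof -
  have "add (sm 0 x) (sm 0 x) = add (sm 0 x) z" using sm_add_scalar[OF assms, of 0 0] assms by simp
  thus ?thesis using add_left_cancel[of "sm 0 x" "sm 0 x" z] assms by simp
qed
lemma sm_zero[simp]: "sm c z = z"
proof -
  have "sm c z = sm c (sm 0 z)" using sm_zero_scalar[OF zero_closed] by simp
  also have "\<dots> = sm (c*0) z" by (rule sm_sm[OF zero_closed])
  also have "\<dots> = z" by simp
  finally show ?thesis .
qed
lemma mul_zero_r[simp]: "x \<in> Cr \<Longrightarrow> mul x z = z"
proof -
  assume x: "x \<in> Cr"
  have "mul x z = mul x (sm 0 z)" using sm_zero_scalar[OF zero_closed] by simp
  also have "\<dots> = sm 0 (mul x z)" using x by (simp only: sm_mul_r zero_closed)
  also have "\<dots> = z" using x by simp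
  finally show ?thesis .
qed
lemma mul_zero_l[simp]: "x \<in> Cr \<Longrightarrow> mul z x = z"
proof -
  assume x: "x \<in> Cr"
  have "mul z x = mul (sm 0 z) x" using sm_zero_scalar[OF zero_closed] by simp
  also have "\<dots> = sm 0 (mul z x)" using x by (simp only: sm_mul_l zero_closed)
  also have "\<dots> = z" using x by simp
  finally show ?thesis .
qed
lemma st_zero[simp]: "st z = z"
proof -
  have "st z = st (sm 0 z)" using sm_zero_scalar[OF zero_closed] by simp
  also have "\<dots> = sm 0 (st z)" by (simp only: st_sm zero_closed complex_cnj_zero)
  also have "\<dots> = z" by simp
  finally show ?thesis .
qed
lemma neg_neg[simp]: "x \<in> Cr \<Longrightarrow> neg (neg x) = x" by simp
lemma sub_closed[simp]: "x \<in> Cr \<Longrightarrow> y \<in> Cr \<Longrightarrow> sub x y \<in> Cr" by (simp add: lsub_def)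
lemma sub_self[simp]: "x \<in> Cr \<Longrightarrow> sub x x = z" by (simp add: lsub_def add_neg)
lemma sub_zero_right[simp]: "x \<in> Cr \<Longrightarrow> sub x z = x" by (simp add: lsub_def)
lemma sub_eq_zero: assumes "x \<in> Cr" "y \<in> Cr" "sub x y = z" shows "x = y"
proof -
  have "x = add (add x (neg y)) y" using assms by (simp add: add_assoc neg_add)
  thus ?thesis using assms by (simp add: lsub_def)
qed
lemma sub_add_cancel: "x \<in> Cr \<Longrightarrow> y \<in> Cr \<Longrightarrow> add (sub x y) y = x"
  by (simp add: lsub_def add_assoc neg_add)
lemma add_sub_cancel: "x \<in> Cr \<Longrightarrow> y \<in> Cr \<Longrightarrow> add y (sub x y) = x"
  by (metis sub_add_cancel add_comm sub_closed)
lemma neg_add_distr: "x \<in> Cr \<Longrightarrow> y \<in> Cr \<Longrightarrow> neg (add x y) = add (neg x) (neg y)" by (simp add: sm_add)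
lemma add_swap4: assumes "a \<in> Cr" "b \<in> Cr" "c \<in> Cr" "d \<in> Cr"
  shows "add (add a b) (add c d) = add (add a c) (add b d)"
proof -
  have "add (add a b) (add c d) = add a (add b (add c d))" using assms by (simp add: add_assoc)
  also have "add b (add c d) = add c (add b d)"
  proof -
    have "add b (add c d) = add (add b c) d" using assms by (simp add: add_assoc)
    also have "\<dots> = add (add c b) d" using assms add_comm[of b c] by simp
    also have "\<dots> = add c (add b d)" using assms by (simp add: add_assoc)
    finally show ?thesis .
  qed
  finally show ?thesis using assms by (simp add: add_assoc)
qed
lemma sub_add_add: assumes "a \<in> Cr" "b \<in> Cr" "c \<in> Cr" "d \<in> Cr"
  shows "sub (add a b) (add c d) = add (sub a c) (sub b d)"
proof -
  have "sub (add a b) (add c d) = add (add a b) (add (neg c) (neg d))" using assms by (simp add: lsub_def sm_add)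
  also have "\<dots> = add (add a (neg c)) (add b (neg d))" using assms by (intro add_swap4) simp_all
  finally show ?thesis by (simp add: lsub_def)
qed
lemma neg_sub: assumes "x \<in> Cr" "y \<in> Cr" shows "neg (sub x y) = sub y x"
  using assms by (simp add: lsub_def sm_add add_comm)
lemma sub_trans: assumes "x \<in> Cr" "y \<in> Cr" "w \<in> Cr" shows "sub x w = add (sub x y) (sub y w)"
proof -
  have "add (sub x y) (sub y w) = add x (add (add (neg y) y) (neg w))"
    using assms by (simp add: lsub_def add_assoc)
  thus ?thesis using assms by (simp add: neg_add lsub_def)
qed
lemma mul_sub_l: "x \<in> Cr \<Longrightarrow> y \<in> Cr \<Longrightarrow> w \<in> Cr \<Longrightarrow> mul (sub x y) w = sub (mul x w) (mul y w)"
  by (simp add: lsub_def distr_r sm_mul_l)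
lemma mul_sub_r: "x \<in> Cr \<Longrightarrow> y \<in> Cr \<Longrightarrow> w \<in> Cr \<Longrightarrow> mul w (sub x y) = sub (mul w x) (mul w y)"
  by (simp add: lsub_def distr_l sm_mul_r)
lemma st_sub: "x \<in> Cr \<Longrightarrow> y \<in> Cr \<Longrightarrow> st (sub x y) = sub (st x) (st y)"
  by (simp add: lsub_def st_add st_sm)
lemma sm_sub: "x \<in> Cr \<Longrightarrow> y \<in> Cr \<Longrightarrow> sm c (sub x y) = sub (sm c x) (sm c y)"
  by (simp add: lsub_def sm_add mult.commute)
lemma sub_add_eq: assumes "x \<in> Cr" "y \<in> Cr" "w \<in> Cr" "add x y = w" shows "y = sub w x"
  using assms by (metis add_sub_cancel add_left_cancel sub_closed)

end


definition near :: "'a lcs_alg \<Rightarrow> 'a set \<Rightarrow> 'a \<Rightarrow> bool" where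
  "near B J x \<longleftrightarrow> (\<forall>F e. finite F \<longrightarrow> F \<subseteq> lsemis B \<longrightarrow> e > 0 \<longrightarrow>
      (\<exists>j\<in>J. \<forall>p\<in>F. p (lsub B j x) < e))"

lemma openin_lcs: "openin (lcs_topology B) = lcs_open B"
  unfolding lcs_topology_def by (rule topology_inverse'[OF istopology_lcs_open])

lemma topspace_lcs[simp]: "topspace (lcs_topology B) = lcarrier B"
proof -
  have "lcs_open B (lcarrier B)" unfolding lcs_open_def
    by (intro conjI ballI exI[of _ "{}"] exI[of _ 1]) auto
  moreover have "\<And>U. lcs_open B U \<Longrightarrow> U \<subseteq> lcarrier B" unfolding lcs_open_def by blast
  ultimately show ?thesis unfolding topspace_def openin_lcs by blast
qed

lemma closedin_lcs: "closedin (lcs_topology B) J \<longleftrightarrow>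
   J \<subseteq> lcarrier B \<and> (\<forall>x\<in>lcarrier B. near B J x \<longrightarrow> x \<in> J)"
proof -
  have c: "closedin (lcs_topology B) J \<longleftrightarrow> J \<subseteq> lcarrier B \<and> lcs_open B (lcarrier B - J)"
    unfolding closedin_def openin_lcs by simp
  show ?thesis
  proof
    assume "closedin (lcs_topology B) J"
    hence J: "J \<subseteq> lcarrier B" and o: "lcs_open B (lcarrier B - J)" using c by auto
    have "x \<in> J" if x: "x \<in> lcarrier B" and n: "near B J x" for x
    proof (rule ccontr)
      assume "x \<notin> J"
      then obtain F e where F: "finite F" "F \<subseteq> lsemis B" "e > 0"
        "{y \<in> lcarrier B. \<forall>p\<in>F. p (lsub B y x) < e} \<subseteq> lcarrier B - J"
        using o x unfolding lcs_open_def by blast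
      obtain j where "j \<in> J" "\<forall>p\<in>F. p (lsub B j x) < e" using n F(1-3) unfolding near_def by blast
      thus False using F(4) J by blast
    qed
    thus "J \<subseteq> lcarrier B \<and> (\<forall>x\<in>lcarrier B. near B J x \<longrightarrow> x \<in> J)" using J by blast
  next
    assume a: "J \<subseteq> lcarrier B \<and> (\<forall>x\<in>lcarrier B. near B J x \<longrightarrow> x \<in> J)"
    have "lcs_open B (lcarrier B - J)" unfolding lcs_open_def
    proof (intro conjI ballI)
      show "lcarrier B - J \<subseteq> lcarrier B" by blast
      fix x assume x: "x \<in> lcarrier B - J"
      hence "\<not> near B J x" using a by blast
      then obtain F e where F: "finite F" "F \<subseteq> lsemis B" "e > 0" "\<not> (\<exists>j\<in>J. \<forall>p\<in>F. p (lsub B j x) < e)"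
        unfolding near_def by blast
      hence "{y \<in> lcarrier B. \<forall>p\<in>F. p (lsub B y x) < e} \<subseteq> lcarrier B - J" by blast
      thus "\<exists>F e. finite F \<and> F \<subseteq> lsemis B \<and> 0 < e \<and> {y \<in> lcarrier B. \<forall>p\<in>F. p (lsub B y x) < e} \<subseteq> lcarrier B - J"
        using F by blast
    qed
    thus "closedin (lcs_topology B) J" using c a by blast
  qed
qed

lemma lim_in_closed:
  assumes "closedin (lcs_topology B) J" "F \<noteq> bot" "eventually (\<lambda>y. y \<in> J) F"
    "x \<in> lcarrier B" "\<forall>p\<in>lsemis B. \<forall>e>0. eventually (\<lambda>y. p (lsub B y x) < e) F"
  shows "x \<in> J"
proof -
  have "near B J x" unfolding near_def
  proof (intro allI impI)
    fix G :: "('a \<Rightarrow> real) set" and e :: real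
    assume G: "finite G" "G \<subseteq> lsemis B" "e > 0"
    have "eventually (\<lambda>y. \<forall>p\<in>G. p (lsub B y x) < e) F"
      by (rule eventually_ball_finite) (use G assms(5) in auto)
    hence "eventually (\<lambda>y. y \<in> J \<and> (\<forall>p\<in>G. p (lsub B y x) < e)) F"
      using assms(3) by (auto intro: eventually_conj)
    from eventually_happens'[OF assms(2) this] show "\<exists>j\<in>J. \<forall>p\<in>G. p (lsub B j x) < e" by blast
  qed
  thus ?thesis using assms(1,4) unfolding closedin_lcs by blast
qed

locale LC =
  fixes A :: "'a lcs_alg"
  assumes lc: "locally_cstar A"

sublocale LC \<subseteq> SA
  using lc unfolding locally_cstar_def SA_def by blast

context LC
begin

abbreviation "Sm \<equiv> lsemis A"

lemma csn: "p \<in> Sm \<Longrightarrow> cstar_seminorm A p" using lc unfolding locally_cstar_def by blast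
lemma hausdorff: "x \<in> Cr \<Longrightarrow> (\<And>p. p \<in> Sm \<Longrightarrow> p x = 0) \<Longrightarrow> x = z"
  using lc unfolding locally_cstar_def by blast
lemma complete: "F \<noteq> bot \<Longrightarrow> eventually (\<lambda>x. x \<in> Cr) F \<Longrightarrow>
       (\<forall>p\<in>Sm. \<forall>e>0. eventually (\<lambda>(x,y). p (sub x y) < e) (F \<times>\<^sub>F F)) \<Longrightarrow>
       (\<exists>x\<in>Cr. \<forall>p\<in>Sm. \<forall>e>0. eventually (\<lambda>y. p (sub y x) < e) F)"
  using lc unfolding locally_cstar_def by blast

lemma p_nonneg: "p \<in> Sm \<Longrightarrow> x \<in> Cr \<Longrightarrow> p x \<ge> 0"
  using csn unfolding cstar_seminorm_def by blast
lemma p_add: "p \<in> Sm \<Longrightarrow> x \<in> Cr \<Longrightarrow> y \<in> Cr \<Longrightarrow> p (add x y) \<le> p x + p y"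
  using csn unfolding cstar_seminorm_def by blast
lemma p_sm: "p \<in> Sm \<Longrightarrow> x \<in> Cr \<Longrightarrow> p (sm c x) = cmod c * p x"
  using csn unfolding cstar_seminorm_def by blast
lemma p_mul: "p \<in> Sm \<Longrightarrow> x \<in> Cr \<Longrightarrow> y \<in> Cr \<Longrightarrow> p (mul x y) \<le> p x * p y"
  using csn unfolding cstar_seminorm_def by blast
lemma p_cstar: "p \<in> Sm \<Longrightarrow> x \<in> Cr \<Longrightarrow> p (mul (st x) x) = (p x)\<^sup>2"
  using csn unfolding cstar_seminorm_def by blast

lemma p_zero[simp]: "p \<in> Sm \<Longrightarrow> p z = 0"
  using p_sm[of p z 0] by simp
lemma p_neg: "p \<in> Sm \<Longrightarrow> x \<in> Cr \<Longrightarrow> p (neg x) = p x"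
  using p_sm[of p x "-1"] by simp
lemma p_sub_sym: "p \<in> Sm \<Longrightarrow> x \<in> Cr \<Longrightarrow> y \<in> Cr \<Longrightarrow> p (sub x y) = p (sub y x)"
  using p_neg[of p "sub x y"] neg_sub[of x y] by simp
lemma p_sub_tri: "p \<in> Sm \<Longrightarrow> x \<in> Cr \<Longrightarrow> y \<in> Cr \<Longrightarrow> w \<in> Cr \<Longrightarrow> p (sub x w) \<le> p (sub x y) + p (sub y w)"
  using sub_trans[of x y w] p_add[of p "sub x y" "sub y w"] by simp

lemma p_st_le: assumes "p \<in> Sm" "x \<in> Cr" shows "p x \<le> p (st x)"
proof (cases "p x = 0")
  case True thus ?thesis using p_nonneg assms by simp
next
  case False
  hence pos: "p x > 0" using p_nonneg[OF assms] by simp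
  have "(p x)\<^sup>2 \<le> p (st x) * p x" using p_cstar[OF assms] p_mul[OF assms(1) st_closed[OF assms(2)] assms(2)] by simp
  thus ?thesis using pos by (simp add: power2_eq_square)
qed
lemma p_st: assumes "p \<in> Sm" "x \<in> Cr" shows "p (st x) = p x"
  using p_st_le[OF assms] p_st_le[OF assms(1) st_closed[OF assms(2)]] assms by simp
lemma p_cstar2: assumes "p \<in> Sm" "x \<in> Cr" shows "p (mul x (st x)) = (p x)\<^sup>2"
  using p_cstar[OF assms(1) st_closed[OF assms(2)]] p_st[OF assms] assms by simp

lemma zero_if_small: assumes "x \<in> Cr" "\<And>p e. p \<in> Sm \<Longrightarrow> e > 0 \<Longrightarrow> p x < e" shows "x = z"
proof (rule hausdorff[OF assms(1)])
  fix p assume p: "p \<in> Sm"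
  have "\<not> p x > 0" using assms(2)[OF p, of "p x"] by auto
  thus "p x = 0" using p_nonneg[OF p assms(1)] by simp
qed

lemma cstar_zero: assumes "x \<in> Cr" "mul (st x) x = z" shows "x = z"
proof (rule hausdorff[OF assms(1)])
  fix p assume p: "p \<in> Sm"
  have "(p x)\<^sup>2 = 0" using p_cstar[OF p assms(1)] assms(2) p by simp
  thus "p x = 0" by simp
qed
lemma cstar_zero2: assumes "x \<in> Cr" "mul x (st x) = z" shows "x = z"
proof -
  have "st x = z" using cstar_zero[of "st x"] assms by simp
  hence "st (st x) = z" by simp
  thus ?thesis using assms by simp
qed

lemma lan_closed: assumes "S \<subseteq> Cr" shows "closedin (lcs_topology A) (lan A S)"
  unfolding closedin_lcs
proof (intro conjI ballI impI)
  show "lan A S \<subseteq> Cr" unfolding lan_def by blast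
  fix x assume x: "x \<in> Cr" and nx: "near A (lan A S) x"
  have "mul x s = z" if s: "s \<in> S" for s
  proof (rule zero_if_small)
    have sC: "s \<in> Cr" using s assms by blast
    show "mul x s \<in> Cr" using x sC by simp
    fix p e assume p: "p \<in> Sm" and e: "(e::real) > 0"
    define d where "d = e / (p s + 1)"
    have ps: "p s \<ge> 0" using p_nonneg[OF p sC] .
    have d: "d > 0" using e ps unfolding d_def by simp
    obtain j where j: "j \<in> lan A S" "p (sub j x) < d"
      using nx p d unfolding near_def by (auto dest!: spec[of _ "{p}"] spec[of _ d])
    have jC: "j \<in> Cr" and js: "mul j s = z" using j(1) s unfolding lan_def by auto
    have "mul x s = sub (mul x s) (mul j s)" using js x sC by simp
    also have "\<dots> = mul (sub x j) s" using mul_sub_l[OF x jC sC] by simp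
    finally have "p (mul x s) \<le> p (sub x j) * p s" using p_mul[OF p sub_closed[OF x jC] sC] by simp
    also have "\<dots> = p (sub j x) * p s" using p_sub_sym[OF p x jC] by simp
    also have "\<dots> \<le> d * p s" using j(2) ps by (simp add: mult_right_mono)
    also have "\<dots> < e" using e ps unfolding d_def by (simp add: field_simps)
    finally show "p (mul x s) < e" .
  qed
  thus "x \<in> lan A S" unfolding lan_def using x by blast
qed

lemma ran_closed: assumes "S \<subseteq> Cr" shows "closedin (lcs_topology A) (ran A S)"
  unfolding closedin_lcs
proof (intro conjI ballI impI)
  show "ran A S \<subseteq> Cr" unfolding ran_def by blast
  fix x assume x: "x \<in> Cr" and nx: "near A (ran A S) x"
  have "mul s x = z" if s: "s \<in> S" for s
  proof (rule zero_if_small)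
    have sC: "s \<in> Cr" using s assms by blast
    show "mul s x \<in> Cr" using x sC by simp
    fix p e assume p: "p \<in> Sm" and e: "(e::real) > 0"
    define d where "d = e / (p s + 1)"
    have ps: "p s \<ge> 0" using p_nonneg[OF p sC] .
    have d: "d > 0" using e ps unfolding d_def by simp
    obtain j where j: "j \<in> ran A S" "p (sub j x) < d"
      using nx p d unfolding near_def by (auto dest!: spec[of _ "{p}"] spec[of _ d])
    have jC: "j \<in> Cr" and js: "mul s j = z" using j(1) s unfolding ran_def by auto
    have "mul s x = sub (mul s x) (mul s j)" using js x sC by simp
    also have "\<dots> = mul s (sub x j)" using mul_sub_r[OF x jC sC] by simp
    finally have "p (mul s x) \<le> p s * p (sub x j)" using p_mul[OF p sC sub_closed[OF x jC]] by simp
    also have "\<dots> = p s * p (sub j x)" using p_sub_sym[OF p x jC] by simp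
    also have "\<dots> \<le> p s * d" using j(2) ps by (simp add: mult_left_mono)
    also have "\<dots> < e" using e ps unfolding d_def by (simp add: field_simps)
    finally show "p (mul s x) < e" .
  qed
  thus "x \<in> ran A S" unfolding ran_def using x by blast
qed

lemma st_image_closed: assumes "closedin (lcs_topology A) I" shows "closedin (lcs_topology A) (st ` I)"
  unfolding closedin_lcs
proof (intro conjI ballI impI)
  have IC: "I \<subseteq> Cr" using assms unfolding closedin_lcs by blast
  thus "st ` I \<subseteq> Cr" by auto
  fix x assume x: "x \<in> Cr" and nx: "near A (st ` I) x"
  have "near A I (st x)" unfolding near_def
  proof (intro allI impI)
    fix F e assume F: "finite F" "F \<subseteq> Sm" "(e::real) > 0"
    then obtain j where j: "j \<in> st ` I" "\<forall>p\<in>F. p (sub j x) < e" using nx unfolding near_def by blast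
    then obtain i where i: "i \<in> I" "j = st i" by blast
    have iC: "i \<in> Cr" using i IC by blast
    have "\<forall>p\<in>F. p (sub i (st x)) < e"
    proof
      fix p assume p: "p \<in> F"
      have "sub i (st x) = st (sub j x)" using i iC x by (simp add: st_sub)
      hence "p (sub i (st x)) = p (sub j x)" using p F(2) p_st[of p "sub j x"] i iC x by auto
      thus "p (sub i (st x)) < e" using j p by simp
    qed
    thus "\<exists>j\<in>I. \<forall>p\<in>F. p (sub j (st x)) < e" using i by blast
  qed
  hence "st x \<in> I" using assms x unfolding closedin_lcs by simp
  thus "x \<in> st ` I" using x by (metis image_eqI st_st)
qed

end


definition sumset :: "'a lcs_alg \<Rightarrow> 'a set \<Rightarrow> 'a set \<Rightarrow> 'a set" where
  "sumset A J K = {ladd A j k | j k. j \<in> J \<and> k \<in> K}"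

context LC
begin

lemma subsp_sub: "subspace_l A J \<Longrightarrow> x \<in> J \<Longrightarrow> y \<in> J \<Longrightarrow> sub x y \<in> J"
  unfolding subspace_l_def lsub_def by blast
lemma subsp_C: "subspace_l A J \<Longrightarrow> x \<in> J \<Longrightarrow> x \<in> Cr"
  unfolding subspace_l_def by blast

lemma p_sub_le: "p \<in> Sm \<Longrightarrow> x \<in> Cr \<Longrightarrow> y \<in> Cr \<Longrightarrow> p (sub x y) \<le> p x + p y"
  using p_add[of p x "neg y"] p_neg[of p y] unfolding lsub_def by simp

lemma sum_closed:
  assumes J: "subspace_l A J" "closedin (lcs_topology A) J"
    and K: "subspace_l A K" "closedin (lcs_topology A) K"
    and orth: "\<And>p j k. p \<in> Sm \<Longrightarrow> j \<in> J \<Longrightarrow> k \<in> K \<Longrightarrow> p j \<le> p (add j k) \<and> p k \<le> p (add j k)"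
  shows "closedin (lcs_topology A) (sumset A J K)"
  unfolding closedin_lcs
proof (intro conjI ballI impI)
  show "sumset A J K \<subseteq> Cr" unfolding sumset_def using J(1) K(1) subsp_C by fastforce
  fix x assume x: "x \<in> Cr" and nx: "near A (sumset A J K) x"
  define Ix where "Ix = {(F, e). finite F \<and> F \<subseteq> Sm \<and> (e::real) > 0}"
  define S :: "(('a \<Rightarrow> real) set \<times> real) \<Rightarrow> 'a set" where "S = (\<lambda>(F, e). {j\<in>J. \<exists>k\<in>K. \<forall>p\<in>F. p (sub (add j k) x) < e})"
  define G where "G = (INF i\<in>Ix. principal (S i))"
  have I0: "({},1) \<in> Ix" unfolding Ix_def by simp
  hence Ine: "Ix \<noteq> {}" by blast
  have dir: "\<exists>c\<in>Ix. principal (S c) \<le> inf (principal (S a)) (principal (S b))"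
    if "a \<in> Ix" "b \<in> Ix" for a b
  proof -
    obtain F1 e1 F2 e2 where ab: "a = (F1,e1)" "b = (F2,e2)" by (cases a, cases b) auto
    have c: "(F1 \<union> F2, min e1 e2) \<in> Ix" using that ab unfolding Ix_def by auto
    have "S (F1 \<union> F2, min e1 e2) \<subseteq> S a \<inter> S b" unfolding S_def ab by force
    thus ?thesis using c by (intro bexI[of _ "(F1 \<union> F2, min e1 e2)"]) auto
  qed
  have ev: "eventually P G \<longleftrightarrow> (\<exists>i\<in>Ix. \<forall>y\<in>S i. P y)" for P
    unfolding G_def by (subst eventually_INF_base[OF Ine dir]) (auto simp: eventually_principal)
  have Gnb: "G \<noteq> bot"
  proof
    assume "G = bot"
    hence "eventually (\<lambda>_. False) G" by simp
    then obtain i where i: "i \<in> Ix" "\<forall>y\<in>S i. False" unfolding ev by blast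
    obtain F e where Fe: "i = (F,e)" "finite F" "F \<subseteq> Sm" "e > 0" using i(1) unfolding Ix_def by blast
    obtain y where y: "y \<in> sumset A J K" "\<forall>p\<in>F. p (sub y x) < e" using nx Fe(2-4) unfolding near_def by blast
    then obtain j k where "j \<in> J" "k \<in> K" "y = add j k" unfolding sumset_def by blast
    hence "j \<in> S i" using y Fe unfolding S_def by auto
    thus False using i by blast
  qed
  have evJ: "eventually (\<lambda>y. y \<in> J) G" unfolding ev
    by (rule bexI[OF _ I0]) (auto simp: S_def)
  have evC: "eventually (\<lambda>y. y \<in> Cr) G" using evJ J(1) subsp_C by (auto elim: eventually_mono)
  have cauchy: "\<forall>p\<in>Sm. \<forall>e>0. eventually (\<lambda>(a,b). p (sub a b) < e) (G \<times>\<^sub>F G)"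
  proof (intro ballI allI impI)
    fix p e assume p: "p \<in> Sm" and e: "(e::real) > 0"
    let ?Q = "\<lambda>y. y \<in> S ({p}, e/2)"
    have "eventually ?Q G" unfolding ev using p e by (intro bexI[of _ "({p}, e/2)"]) (auto simp: Ix_def)
    moreover have "p (sub a b) < e" if "?Q a" "?Q b" for a b
    proof -
      have "a \<in> J \<and> (\<exists>k\<in>K. p (sub (add a k) x) < e/2)" using that(1) unfolding S_def by simp
      then obtain k where a: "a \<in> J" "k \<in> K" "p (sub (add a k) x) < e/2" by blast
      have "b \<in> J \<and> (\<exists>k\<in>K. p (sub (add b k) x) < e/2)" using that(2) unfolding S_def by simp
      then obtain k' where b: "b \<in> J" "k' \<in> K" "p (sub (add b k') x) < e/2" by blast
      have C: "a \<in> Cr" "b \<in> Cr" "k \<in> Cr" "k' \<in> Cr" using a b J(1) K(1) subsp_C by auto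
      have "p (sub a b) \<le> p (add (sub a b) (sub k k'))"
        using orth[OF p subsp_sub[OF J(1) a(1) b(1)] subsp_sub[OF K(1) a(2) b(2)]] by simp
      also have "add (sub a b) (sub k k') = sub (add a k) (add b k')" using C by (simp add: sub_add_add)
      also have "p \<dots> \<le> p (sub (add a k) x) + p (sub x (add b k'))" using p_sub_tri[OF p] C x by simp
      also have "p (sub x (add b k')) = p (sub (add b k') x)" using p_sub_sym[OF p] C x by simp
      finally show ?thesis using a(3) b(3) by simp
    qed
    ultimately show "eventually (\<lambda>(a,b). p (sub a b) < e) (G \<times>\<^sub>F G)"
      unfolding eventually_prod_same by blast
  qed
  obtain j0 where j0: "j0 \<in> Cr" "\<forall>p\<in>Sm. \<forall>e>0. eventually (\<lambda>y. p (sub y j0) < e) G"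
    using complete[OF Gnb evC cauchy] by blast
  have j0J: "j0 \<in> J" by (rule lim_in_closed[OF J(2) Gnb evJ j0(1) j0(2)])
  define k0 where "k0 = sub x j0"
  have k0C: "k0 \<in> Cr" unfolding k0_def using x j0 by simp
  have xk: "x = add j0 k0" unfolding k0_def using x j0(1) by (simp add: add_sub_cancel)
  have "near A K k0" unfolding near_def
  proof (intro allI impI)
    fix F e assume F: "finite F" "F \<subseteq> Sm" "(e::real) > 0"
    have "\<forall>p\<in>F. eventually (\<lambda>y. p (sub y j0) < e/2) G"
    proof
      fix p assume "p \<in> F"
      hence "p \<in> Sm" using F by blast
      moreover have "e/2 > 0" using F by simp
      ultimately show "eventually (\<lambda>y. p (sub y j0) < e/2) G" using j0(2) by blast
    qed
    from eventually_ball_finite[OF F(1) this]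
    have "eventually (\<lambda>y. \<forall>p\<in>F. p (sub y j0) < e/2) G" .
    moreover have "eventually (\<lambda>y. y \<in> S (F, e/2)) G" unfolding ev using F
      by (intro bexI[of _ "(F, e/2)"]) (auto simp: Ix_def)
    ultimately have "eventually (\<lambda>y. (\<forall>p\<in>F. p (sub y j0) < e/2) \<and> y \<in> S (F, e/2)) G"
      by (rule eventually_conj)
    then obtain j where j: "\<forall>p\<in>F. p (sub j j0) < e/2" "j \<in> S (F, e/2)"
      using eventually_happens'[OF Gnb] by blast
    then obtain k where k: "j \<in> J" "k \<in> K" "\<forall>p\<in>F. p (sub (add j k) x) < e/2" unfolding S_def by auto
    have C: "j \<in> Cr" "k \<in> Cr" using k J(1) K(1) subsp_C by auto
    have eq: "sub (add j k) x = add (sub j j0) (sub k k0)" using C j0(1) k0C xk sub_add_add[of j k j0 k0] by simp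
    have eq2: "sub k k0 = sub (sub (add j k) x) (sub j j0)"
      by (rule sub_add_eq[OF _ _ _ eq[symmetric]]) (use C j0(1) k0C x in simp_all)
    have "\<forall>p\<in>F. p (sub k k0) < e"
    proof
      fix p assume pF: "p \<in> F"
      hence p: "p \<in> Sm" using F by blast
      have "p (sub k k0) \<le> p (sub (add j k) x) + p (sub j j0)"
        unfolding eq2 by (rule p_sub_le[OF p]) (use C j0(1) x in simp_all)
      thus "p (sub k k0) < e" using j(1) k(3) pF by fastforce
    qed
    thus "\<exists>k\<in>K. \<forall>p\<in>F. p (sub k k0) < e" using k by blast
  qed
  hence "k0 \<in> K" using K(2) k0C unfolding closedin_lcs by blast
  thus "x \<in> sumset A J K" unfolding sumset_def using xk j0J by blast
qed

end


definition ideal2 :: "'a lcs_alg \<Rightarrow> 'a set \<Rightarrow> bool" where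
  "ideal2 A J \<longleftrightarrow> subspace_l A J \<and> (\<forall>a\<in>lcarrier A. \<forall>x\<in>J. lmult A a x \<in> J) \<and>
     (\<forall>a\<in>lcarrier A. \<forall>x\<in>J. lmult A x a \<in> J)"

lemma closed_ideal_iff: "closed_ideal A J \<longleftrightarrow> ideal2 A J \<and> closedin (lcs_topology A) J"
  unfolding closed_ideal_def closed_left_ideal_def closed_right_ideal_def ideal2_def by blast

locale LCA = LC +
  assumes ann: "annihilator_alg A"

context LC
begin

lemma id_sub: "ideal2 A J \<Longrightarrow> subspace_l A J" unfolding ideal2_def by blast
lemma id_C: "ideal2 A J \<Longrightarrow> x \<in> J \<Longrightarrow> x \<in> Cr" unfolding ideal2_def subspace_l_def by blast
lemma id_ml: "ideal2 A J \<Longrightarrow> a \<in> Cr \<Longrightarrow> x \<in> J \<Longrightarrow> mul a x \<in> J" unfolding ideal2_def by blast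
lemma id_mr: "ideal2 A J \<Longrightarrow> a \<in> Cr \<Longrightarrow> x \<in> J \<Longrightarrow> mul x a \<in> J" unfolding ideal2_def by blast
lemma id_add: "ideal2 A J \<Longrightarrow> x \<in> J \<Longrightarrow> y \<in> J \<Longrightarrow> add x y \<in> J" unfolding ideal2_def subspace_l_def by blast
lemma id_sm: "ideal2 A J \<Longrightarrow> x \<in> J \<Longrightarrow> sm c x \<in> J" unfolding ideal2_def subspace_l_def by blast
lemma id_z: "ideal2 A J \<Longrightarrow> z \<in> J" unfolding ideal2_def subspace_l_def by blast
lemma id_subt: "ideal2 A J \<Longrightarrow> x \<in> J \<Longrightarrow> y \<in> J \<Longrightarrow> sub x y \<in> J"
  using subsp_sub id_sub by blast

lemma id_Int: assumes "ideal2 A J1" "ideal2 A J2" shows "ideal2 A (J1 \<inter> J2)"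
  unfolding ideal2_def subspace_l_def
proof (intro conjI ballI allI)
  show "J1 \<inter> J2 \<subseteq> Cr" using id_C[OF assms(1)] by blast
  show "z \<in> J1 \<inter> J2" using id_z[OF assms(1)] id_z[OF assms(2)] by blast
  fix x assume x: "x \<in> J1 \<inter> J2"
  { fix y assume "y \<in> J1 \<inter> J2" thus "add x y \<in> J1 \<inter> J2" using x id_add[OF assms(1)] id_add[OF assms(2)] by blast }
  { fix c show "sm c x \<in> J1 \<inter> J2" using x id_sm[OF assms(1)] id_sm[OF assms(2)] by blast }
  { fix a assume "a \<in> Cr"
    thus "mul a x \<in> J1 \<inter> J2" using x id_ml[OF assms(1)] id_ml[OF assms(2)] by blast
    show "mul x a \<in> J1 \<inter> J2" using x id_mr[OF assms(1)] id_mr[OF assms(2)] \<open>a \<in> Cr\<close> by blast }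
qed

lemma lan_ideal: assumes "ideal2 A J" shows "ideal2 A (lan A J)"
  unfolding ideal2_def subspace_l_def
proof (intro conjI ballI allI)
  have JC: "\<And>j. j \<in> J \<Longrightarrow> j \<in> Cr" using id_C[OF assms] .
  show "lan A J \<subseteq> Cr" unfolding lan_def by blast
  show "z \<in> lan A J" unfolding lan_def using JC by simp
  fix x assume x: "x \<in> lan A J"
  have xC: "x \<in> Cr" and xj: "\<And>j. j \<in> J \<Longrightarrow> mul x j = z" using x unfolding lan_def by auto
  { fix y assume "y \<in> lan A J"
    hence yC: "y \<in> Cr" and yj: "\<And>j. j \<in> J \<Longrightarrow> mul y j = z" unfolding lan_def by auto
    show "add x y \<in> lan A J" unfolding lan_def using xC yC xj yj JC by (simp add: distr_r) }
  { fix c show "sm c x \<in> lan A J" unfolding lan_def using xC xj JC by (simp add: sm_mul_l) }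
  { fix a assume a: "a \<in> Cr"
    show "mul a x \<in> lan A J" unfolding lan_def using a xC xj JC by (simp add: mul_assoc)
    show "mul x a \<in> lan A J" unfolding lan_def using a xC xj JC id_ml[OF assms a] by (simp add: mul_assoc) }
qed

lemma ran_sub_lan: assumes J: "ideal2 A J" "st ` J \<subseteq> J" shows "ran A J \<subseteq> lan A J"
proof
  fix x assume x: "x \<in> ran A J"
  have xC: "x \<in> Cr" and xj: "\<And>j. j \<in> J \<Longrightarrow> mul j x = z" using x unfolding ran_def by auto
  have "mul x j = z" if j: "j \<in> J" for j
  proof (rule cstar_zero)
    have jC: "j \<in> Cr" using id_C[OF J(1) j] .
    let ?y = "mul x j"
    have yJ: "?y \<in> J" using id_ml[OF J(1) xC j] .
    have syJ: "st ?y \<in> J" using J(2) yJ by blast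
    show "?y \<in> Cr" using xC jC by simp
    have "mul (st ?y) ?y = mul (mul (st ?y) x) j" using xC jC by (simp add: mul_assoc)
    also have "\<dots> = z" using xj[OF syJ] jC by simp
    finally show "mul (st ?y) ?y = z" .
  qed
  thus "x \<in> lan A J" unfolding lan_def using xC by blast
qed

lemma lan_sub_ran: assumes J: "ideal2 A J" "st ` J \<subseteq> J" shows "lan A J \<subseteq> ran A J"
proof
  fix x assume x: "x \<in> lan A J"
  have xC: "x \<in> Cr" and xj: "\<And>j. j \<in> J \<Longrightarrow> mul x j = z" using x unfolding lan_def by auto
  have "mul j x = z" if j: "j \<in> J" for j
  proof (rule cstar_zero2)
    have jC: "j \<in> Cr" using id_C[OF J(1) j] .
    let ?y = "mul j x"
    have yJ: "?y \<in> J" using id_mr[OF J(1) xC j] .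
    have syJ: "st ?y \<in> J" using J(2) yJ by blast
    show "?y \<in> Cr" using xC jC by simp
    have "mul ?y (st ?y) = mul j (mul x (st ?y))" using xC jC by (simp add: mul_assoc)
    also have "\<dots> = z" using xj[OF syJ] jC by simp
    finally show "mul ?y (st ?y) = z" .
  qed
  thus "x \<in> ran A J" unfolding ran_def using xC by blast
qed

lemma lan_st: assumes J: "ideal2 A J" "st ` J \<subseteq> J" shows "st ` lan A J \<subseteq> lan A J"
proof
  fix y assume "y \<in> st ` lan A J"
  then obtain x where x: "x \<in> lan A J" "y = st x" by blast
  have xr: "x \<in> ran A J" using x lan_sub_ran[OF J] by blast
  have xC: "x \<in> Cr" using x unfolding lan_def by blast
  have "mul (st x) j = z" if j: "j \<in> J" for j
  proof -
    have jC: "j \<in> Cr" using id_C[OF J(1) j] .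
    have "st j \<in> J" using J(2) j by blast
    hence "mul (st j) x = z" using xr unfolding ran_def by blast
    hence "st (mul (st j) x) = z" by simp
    thus ?thesis using xC jC by (simp add: st_mul)
  qed
  thus "y \<in> lan A J" unfolding lan_def using x xC by simp
qed

lemma orth_ineq: assumes J: "ideal2 A J" "st ` J \<subseteq> J" and p: "p \<in> Sm" and j: "j \<in> J" and k: "k \<in> lan A J"
  shows "p j \<le> p (add j k) \<and> p k \<le> p (add j k)"
proof
  have jC: "j \<in> Cr" using id_C[OF J(1) j] .
  have kC: "k \<in> Cr" using k unfolding lan_def by blast
  have stj: "st j \<in> J" using J(2) j by blast
  have kr: "k \<in> ran A J" using k lan_sub_ran[OF J] by blast
  have stk: "st k \<in> lan A J" using lan_st[OF J] k by blast
  have pjk: "p (add j k) \<ge> 0" using p_nonneg[OF p] jC kC by simp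
  have "mul (st j) (add j k) = mul (st j) j"
    using jC kC kr stj unfolding ran_def by (simp add: distr_l)
  hence "(p j)\<^sup>2 = p (mul (st j) (add j k))" using p_cstar[OF p jC] by simp
  also have "\<dots> \<le> p (st j) * p (add j k)" using p_mul[OF p] jC kC by simp
  also have "\<dots> = p j * p (add j k)" using p_st[OF p jC] by simp
  finally have "p j * p j \<le> p j * p (add j k)" by (simp add: power2_eq_square)
  thus "p j \<le> p (add j k)"
  proof (cases "p j = 0")
    case True thus ?thesis using pjk by simp
  next
    case False hence "p j > 0" using p_nonneg[OF p jC] by simp
    thus ?thesis using mult_left_le_imp_le \<open>p j * p j \<le> p j * p (add j k)\<close> by blast
  qed
  have "mul (st k) (add j k) = mul (st k) k"
    using jC kC stk j unfolding lan_def by (simp add: distr_l)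
  hence "(p k)\<^sup>2 = p (mul (st k) (add j k))" using p_cstar[OF p kC] by simp
  also have "\<dots> \<le> p (st k) * p (add j k)" using p_mul[OF p] jC kC by simp
  also have "\<dots> = p k * p (add j k)" using p_st[OF p kC] by simp
  finally have "p k * p k \<le> p k * p (add j k)" by (simp add: power2_eq_square)
  thus "p k \<le> p (add j k)"
  proof (cases "p k = 0")
    case True thus ?thesis using pjk by simp
  next
    case False hence "p k > 0" using p_nonneg[OF p kC] by simp
    thus ?thesis using mult_left_le_imp_le \<open>p k * p k \<le> p k * p (add j k)\<close> by blast
  qed
qed

lemma lan_inter: assumes J: "ideal2 A J" "st ` J \<subseteq> J" shows "J \<inter> lan A J = {z}"
proof
  show "{z} \<subseteq> J \<inter> lan A J" using id_z[OF J(1)] id_z[OF lan_ideal[OF J(1)]] by blast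
  show "J \<inter> lan A J \<subseteq> {z}"
  proof
    fix x assume x: "x \<in> J \<inter> lan A J"
    have xC: "x \<in> Cr" using x unfolding lan_def by blast
    have "st x \<in> J" using J(2) x by blast
    hence "mul x (st x) = z" using x unfolding lan_def by blast
    thus "x \<in> {z}" using cstar_zero2[OF xC] by simp
  qed
qed

end

context LCA
begin

lemma ann_left: "closed_left_ideal A J \<Longrightarrow> ran A J = {z} \<Longrightarrow> J = Cr"
  using ann unfolding annihilator_alg_def by blast

lemma decomp:
  assumes J: "ideal2 A J" "closedin (lcs_topology A) J" "st ` J \<subseteq> J"
  shows "sumset A J (lan A J) = Cr"
proof -
  let ?K = "lan A J"
  have JC: "J \<subseteq> Cr" using id_C[OF J(1)] by blast
  have K: "ideal2 A ?K" "closedin (lcs_topology A) ?K" using lan_ideal[OF J(1)] lan_closed[OF JC] by auto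
  have cl: "closedin (lcs_topology A) (sumset A J ?K)"
    by (rule sum_closed[OF id_sub[OF J(1)] J(2) id_sub[OF K(1)] K(2)]) (rule orth_ineq[OF J(1) J(3)])
  have sub: "subspace_l A (sumset A J ?K)" unfolding subspace_l_def sumset_def
  proof (intro conjI ballI allI)
    show "{add j k |j k. j \<in> J \<and> k \<in> ?K} \<subseteq> Cr" using id_C[OF J(1)] id_C[OF K(1)] by auto
    show "z \<in> {add j k |j k. j \<in> J \<and> k \<in> ?K}" using id_z[OF J(1)] id_z[OF K(1)]
      by (intro CollectI exI[of _ z]) simp
    fix x assume "x \<in> {add j k |j k. j \<in> J \<and> k \<in> ?K}"
    then obtain j k where x: "x = add j k" "j \<in> J" "k \<in> ?K" by blast
    have C: "j \<in> Cr" "k \<in> Cr" using x id_C[OF J(1)] id_C[OF K(1)] by auto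
    { fix y assume "y \<in> {add j k |j k. j \<in> J \<and> k \<in> ?K}"
      then obtain j' k' where y: "y = add j' k'" "j' \<in> J" "k' \<in> ?K" by blast
      have C': "j' \<in> Cr" "k' \<in> Cr" using y id_C[OF J(1)] id_C[OF K(1)] by auto
      have "add x y = add (add j j') (add k k')" using x y C C' by (simp add: add_swap4)
      thus "add x y \<in> {add j k |j k. j \<in> J \<and> k \<in> ?K}"
        using id_add[OF J(1) x(2) y(2)] id_add[OF K(1) x(3) y(3)] by blast }
    { fix c have "sm c x = add (sm c j) (sm c k)" using x C by (simp add: sm_add)
      thus "sm c x \<in> {add j k |j k. j \<in> J \<and> k \<in> ?K}"
        using id_sm[OF J(1) x(2)] id_sm[OF K(1) x(3)] by blast }
  qed
  have left: "\<forall>a\<in>Cr. \<forall>x\<in>sumset A J ?K. mul a x \<in> sumset A J ?K"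
  proof (intro ballI)
    fix a x assume a: "a \<in> Cr" and "x \<in> sumset A J ?K"
    then obtain j k where x: "x = add j k" "j \<in> J" "k \<in> ?K" unfolding sumset_def by blast
    have C: "j \<in> Cr" "k \<in> Cr" using x id_C[OF J(1)] id_C[OF K(1)] by auto
    have "mul a x = add (mul a j) (mul a k)" using x a C by (simp add: distr_l)
    thus "mul a x \<in> sumset A J ?K" unfolding sumset_def
      using id_ml[OF J(1) a x(2)] id_ml[OF K(1) a x(3)] by blast
  qed
  have cli: "closed_left_ideal A (sumset A J ?K)" unfolding closed_left_ideal_def using sub left cl by blast
  have "ran A (sumset A J ?K) = {z}"
  proof
    show "{z} \<subseteq> ran A (sumset A J ?K)" unfolding ran_def using sub unfolding subspace_l_def by auto
    show "ran A (sumset A J ?K) \<subseteq> {z}"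
    proof
      fix x assume x: "x \<in> ran A (sumset A J ?K)"
      have xC: "x \<in> Cr" using x unfolding ran_def by blast
      have "mul j x = z" if "j \<in> J" for j
      proof -
        have "add j z \<in> sumset A J ?K" unfolding sumset_def using that id_z[OF K(1)] by blast
        thus ?thesis using x id_C[OF J(1) that] unfolding ran_def by auto
      qed
      hence "x \<in> ran A J" unfolding ran_def using xC by blast
      hence xK: "x \<in> ?K" using ran_sub_lan[OF J(1) J(3)] by blast
      hence "st x \<in> ?K" using lan_st[OF J(1) J(3)] by blast
      hence "add z (st x) \<in> sumset A J ?K" unfolding sumset_def using id_z[OF J(1)] by blast
      hence "mul (add z (st x)) x = z" using x unfolding ran_def by blast
      hence "mul (st x) x = z" using xC by simp
      thus "x \<in> {z}" using cstar_zero[OF xC] by simp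
    qed
  qed
  thus ?thesis using ann_left[OF cli] by blast
qed

lemma selfadj:
  assumes I: "ideal2 A I" "closedin (lcs_topology A) I"
  shows "st ` I \<subseteq> I"
proof -
  have IC: "I \<subseteq> Cr" using id_C[OF I(1)] by blast
  let ?J = "I \<inter> st ` I"
  have sI: "ideal2 A (st ` I)" unfolding ideal2_def subspace_l_def
  proof (intro conjI ballI allI)
    show "st ` I \<subseteq> Cr" using IC by auto
    show "z \<in> st ` I" using id_z[OF I(1)] st_zero by (intro rev_image_eqI[of z]) simp_all
    fix x assume "x \<in> st ` I"
    then obtain i where i: "i \<in> I" "x = st i" by blast
    have iC: "i \<in> Cr" using IC i by blast
    { fix y assume "y \<in> st ` I"
      then obtain i' where i': "i' \<in> I" "y = st i'" by blast
      have i'C: "i' \<in> Cr" using i' IC by blast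
      have "add x y = st (add i i')" using i i' iC i'C by (simp add: st_add)
      thus "add x y \<in> st ` I" using id_add[OF I(1) i(1) i'(1)] by blast }
    { fix c have "sm c x = st (sm (cnj c) i)" using i iC by (simp add: st_sm)
      thus "sm c x \<in> st ` I" using id_sm[OF I(1) i(1)] by blast }
    { fix a assume a: "a \<in> Cr"
      have "mul a x = st (mul i (st a))" using a i iC by (simp add: st_mul)
      thus "mul a x \<in> st ` I" using id_mr[OF I(1) st_closed[OF a] i(1)] by blast
      have "mul x a = st (mul (st a) i)" using a i iC by (simp add: st_mul)
      thus "mul x a \<in> st ` I" using id_ml[OF I(1) st_closed[OF a] i(1)] by blast }
  qed
  have J: "ideal2 A ?J" by (rule id_Int[OF I(1) sI])
  have Jc: "closedin (lcs_topology A) ?J" using I(2) st_image_closed[OF I(2)] by (rule closedin_Int)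
  have Js: "st ` ?J \<subseteq> ?J"
  proof
    fix y assume "y \<in> st ` ?J"
    then obtain x where x: "x \<in> I" "x \<in> st ` I" "y = st x" by blast
    then obtain i where i: "i \<in> I" "x = st i" by blast
    have iC: "i \<in> Cr" using i IC by blast
    have "y = i" using x(3) i(2) st_st[OF iC] by simp
    thus "y \<in> ?J" using x i by blast
  qed
  have dec: "sumset A ?J (lan A ?J) = Cr" by (rule decomp[OF J Jc Js])
  have "I \<subseteq> st ` I"
  proof
    fix x assume x: "x \<in> I"
    have xC: "x \<in> Cr" using x IC by blast
    then obtain j k where jk: "x = add j k" "j \<in> ?J" "k \<in> lan A ?J" using dec unfolding sumset_def by blast
    have jC: "j \<in> Cr" using jk IC by blast
    have kC: "k \<in> Cr" using jk unfolding lan_def by blast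
    have keq: "k = sub x j" by (rule sub_add_eq[OF jC kC xC jk(1)[symmetric]])
    have kI: "k \<in> I" unfolding keq using id_subt[OF I(1) x] jk(2) by blast
    let ?y = "mul (st k) k"
    have yI: "?y \<in> I" using id_ml[OF I(1) st_closed[OF kC] kI] .
    have sty: "st ?y = ?y" using kC by (simp add: st_mul)
    have "?y \<in> st ` I" using yI sty by (intro rev_image_eqI[of ?y]) simp_all
    hence yJ: "?y \<in> ?J" using yI by blast
    have yK: "?y \<in> lan A ?J" using id_ml[OF lan_ideal[OF J] st_closed[OF kC] jk(3)] .
    have "?y = z" using lan_inter[OF J Js] yJ yK by blast
    hence "k = z" using cstar_zero[OF kC] by simp
    hence "x = j" using jk(1) jC by simp
    thus "x \<in> st ` I" using jk(2) by blast
  qed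
  show ?thesis
  proof
    fix y assume "y \<in> st ` I"
    then obtain x where x: "x \<in> I" "y = st x" by blast
    then obtain i where i: "i \<in> I" "x = st i" using \<open>I \<subseteq> st ` I\<close> by blast
    have "y = i" using x i st_st[of i] IC by blast
    thus "y \<in> I" using i by simp
  qed
qed

end


lemma sub_alg_simps[simp]:
  "lcarrier (sub_alg A I) = I" "lzero (sub_alg A I) = lzero A" "ladd (sub_alg A I) = ladd A"
  "lsmult (sub_alg A I) = lsmult A" "lmult (sub_alg A I) = lmult A" "lstar (sub_alg A I) = lstar A"
  "lsemis (sub_alg A I) = lsemis A" "lsub (sub_alg A I) = lsub A"
  unfolding sub_alg_def lsub_def by (simp_all add: fun_eq_iff)

lemma near_sub[simp]: "near (sub_alg A I) = near A"
  unfolding near_def by (simp add: fun_eq_iff)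

context LC
begin

lemma sumset_subsp: assumes "subspace_l A J" "subspace_l A K" shows "subspace_l A (sumset A J K)"
  unfolding subspace_l_def sumset_def
proof (intro conjI ballI allI)
  show "{add j k |j k. j \<in> J \<and> k \<in> K} \<subseteq> Cr" using subsp_C[OF assms(1)] subsp_C[OF assms(2)] by auto
  have "z \<in> J" "z \<in> K" using assms unfolding subspace_l_def by auto
  thus "z \<in> {add j k |j k. j \<in> J \<and> k \<in> K}" by (intro CollectI exI[of _ z]) simp
  fix x assume "x \<in> {add j k |j k. j \<in> J \<and> k \<in> K}"
  then obtain j k where x: "x = add j k" "j \<in> J" "k \<in> K" by blast
  have C: "j \<in> Cr" "k \<in> Cr" using x subsp_C[OF assms(1)] subsp_C[OF assms(2)] by auto
  { fix y assume "y \<in> {add j k |j k. j \<in> J \<and> k \<in> K}"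
    then obtain j' k' where y: "y = add j' k'" "j' \<in> J" "k' \<in> K" by blast
    have C': "j' \<in> Cr" "k' \<in> Cr" using y subsp_C[OF assms(1)] subsp_C[OF assms(2)] by auto
    have "add x y = add (add j j') (add k k')" using x y C C' by (simp add: add_swap4)
    moreover have "add j j' \<in> J" "add k k' \<in> K" using assms x y unfolding subspace_l_def by auto
    ultimately show "add x y \<in> {add j k |j k. j \<in> J \<and> k \<in> K}" by blast }
  { fix c have "sm c x = add (sm c j) (sm c k)" using x C by (simp add: sm_add)
    moreover have "sm c j \<in> J" "sm c k \<in> K" using assms x unfolding subspace_l_def by auto
    ultimately show "sm c x \<in> {add j k |j k. j \<in> J \<and> k \<in> K}" by blast }
qed

lemma star_alg_sub: assumes S: "subspace_l A S" "\<forall>a\<in>S. \<forall>b\<in>S. mul a b \<in> S" "st ` S \<subseteq> S"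
  shows "star_alg (sub_alg A S)"
proof -
  have SC: "\<And>x. x \<in> S \<Longrightarrow> x \<in> Cr" using subsp_C[OF S(1)] .
  have cl: "z \<in> S" "\<And>x y. x \<in> S \<Longrightarrow> y \<in> S \<Longrightarrow> add x y \<in> S" "\<And>c x. x \<in> S \<Longrightarrow> sm c x \<in> S"
    "\<And>x. x \<in> S \<Longrightarrow> st x \<in> S"
    using S unfolding subspace_l_def by auto
  show ?thesis unfolding star_alg_def sub_alg_simps
    apply (intro conjI ballI allI)
    using cl S(2) apply (simp_all add: SC add_assoc add_neg sm_add_scalar sm_add mul_assoc distr_r distr_l
        sm_mul_l sm_mul_r st_add st_sm st_mul)
    apply (rule add_comm; simp add: SC)
    done
qed

lemma csn_sub: assumes "S \<subseteq> Cr" "p \<in> Sm" shows "cstar_seminorm (sub_alg A S) p"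
  unfolding cstar_seminorm_def sub_alg_simps
  using assms p_nonneg p_add p_sm p_mul p_cstar by (auto simp: subset_iff)

lemma lc_sub: assumes S: "subspace_l A S" "\<forall>a\<in>S. \<forall>b\<in>S. mul a b \<in> S" "st ` S \<subseteq> S"
    "closedin (lcs_topology A) S"
  shows "locally_cstar (sub_alg A S)"
  unfolding locally_cstar_def
proof (intro conjI allI impI ballI)
  have SC: "S \<subseteq> Cr" using subsp_C[OF S(1)] by blast
  show "star_alg (sub_alg A S)" by (rule star_alg_sub[OF S(1-3)])
  show "cstar_seminorm (sub_alg A S) p" if "p \<in> lsemis (sub_alg A S)" for p
    using csn_sub[OF SC] that by simp
  show "x = lzero (sub_alg A S)" if "x \<in> lcarrier (sub_alg A S)" "\<forall>p\<in>lsemis (sub_alg A S). p x = 0" for x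
    using hausdorff[of x] that SC by auto
  fix F :: "'a filter"
  assume nb: "F \<noteq> bot" and evS: "eventually (\<lambda>x. x \<in> lcarrier (sub_alg A S)) F"
    and ca: "\<forall>p\<in>lsemis (sub_alg A S). \<forall>e>0. eventually (\<lambda>(x, y). p (lsub (sub_alg A S) x y) < e) (F \<times>\<^sub>F F)"
  have evC: "eventually (\<lambda>x. x \<in> Cr) F" using evS SC by (auto elim: eventually_mono)
  obtain x where x: "x \<in> Cr" "\<forall>p\<in>Sm. \<forall>e>0. eventually (\<lambda>y. p (sub y x) < e) F"
    using complete[OF nb evC] ca by auto
  have "x \<in> S" by (rule lim_in_closed[OF S(4) nb _ x]) (use evS in simp)
  thus "\<exists>x\<in>lcarrier (sub_alg A S). \<forall>p\<in>lsemis (sub_alg A S). \<forall>e>0. eventually (\<lambda>y. p (lsub (sub_alg A S) y x) < e) F"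
    using x by auto
qed

end


locale SPL = LCA +
  fixes I K :: "'a set"
  assumes Iid: "ideal2 A I" and Icl: "closedin (lcs_topology A) I" and Ist: "st ` I \<subseteq> I"
    and Kid: "ideal2 A K" and Kcl: "closedin (lcs_topology A) K" and Kst: "st ` K \<subseteq> K"
    and IK: "\<And>i k. i \<in> I \<Longrightarrow> k \<in> K \<Longrightarrow> mul i k = z"
    and KI: "\<And>i k. i \<in> I \<Longrightarrow> k \<in> K \<Longrightarrow> mul k i = z"
    and sumIK: "sumset A I K = Cr"
    and capIK: "I \<inter> K = {z}"
begin

lemma IC: "x \<in> I \<Longrightarrow> x \<in> Cr" using id_C[OF Iid] .
lemma KC: "x \<in> K \<Longrightarrow> x \<in> Cr" using id_C[OF Kid] .

lemma K_lan: "K \<subseteq> lan A I" unfolding lan_def using KC KI by blast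

lemma orthIK: assumes "p \<in> Sm" "i \<in> I" "k \<in> K" shows "p i \<le> p (add i k) \<and> p k \<le> p (add i k)"
proof -
  have "k \<in> lan A I" using K_lan assms(3) by (rule subsetD)
  thus ?thesis by (rule orth_ineq[OF Iid Ist assms(1,2)])
qed

lemma split: assumes "x \<in> Cr" obtains i k where "i \<in> I" "k \<in> K" "x = add i k"
proof -
  have "x \<in> sumset A I K" using assms sumIK by simp
  thus ?thesis using that unfolding sumset_def by blast
qed

lemma split_unique: assumes "i \<in> I" "k \<in> K" "i' \<in> I" "k' \<in> K" "add i k = add i' k'"
  shows "i = i' \<and> k = k'"
proof -
  have C: "i \<in> Cr" "k \<in> Cr" "i' \<in> Cr" "k' \<in> Cr" using assms(1-4) IC KC by auto
  have "sub (add i k) (add i' k') = z" unfolding assms(5) by (rule sub_self) (use C in simp)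
  hence e0: "add (sub i i') (sub k k') = z" using sub_add_add[OF C(1,2,3,4)] by simp
  have "sub k k' = sub z (sub i i')" by (rule sub_add_eq[OF _ _ _ e0]) (use C in simp_all)
  also have "\<dots> = neg (sub i i')" unfolding lsub_def by (rule add_zero_left) (use C in simp)
  finally have e: "sub k k' = neg (sub i i')" .
  have kK: "sub k k' \<in> K" using id_subt[OF Kid assms(2,4)] .
  have iI: "neg (sub i i') \<in> I" using id_sm[OF Iid id_subt[OF Iid assms(1,3)]] .
  have "sub k k' \<in> I \<inter> K" using kK iI e by simp
  hence kz: "sub k k' = z" using capIK by blast
  hence kk: "k = k'" using sub_eq_zero C by blast
  have nz: "neg (sub i i') = z" using e kz by simp
  have "sub i i' = neg (neg (sub i i'))" using C by simp
  also have "\<dots> = z" unfolding nz by simp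
  finally have "i = i'" using sub_eq_zero C by blast
  thus ?thesis using kk by simp
qed

lemma ran_I_zero: assumes "a \<in> I" "\<forall>s\<in>I. mul s a = z" shows "a = z"
proof -
  have "st a \<in> st ` I" using assms(1) by (rule imageI)
  hence "st a \<in> I" using Ist by blast
  hence "mul (st a) a = z" using assms(2) by blast
  thus ?thesis by (rule cstar_zero[OF IC[OF assms(1)]])
qed
lemma lan_I_zero: assumes "a \<in> I" "\<forall>s\<in>I. mul a s = z" shows "a = z"
proof -
  have "st a \<in> st ` I" using assms(1) by (rule imageI)
  hence "st a \<in> I" using Ist by blast
  hence "mul a (st a) = z" using assms(2) by blast
  thus ?thesis by (rule cstar_zero2[OF IC[OF assms(1)]])
qed
lemma K_zero: assumes "a \<in> K" "\<forall>s\<in>K. mul s a = z" shows "a = z"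
proof -
  have "st a \<in> st ` K" using assms(1) by (rule imageI)
  hence "st a \<in> K" using Kst by blast
  hence "mul (st a) a = z" using assms(2) by blast
  thus ?thesis by (rule cstar_zero[OF KC[OF assms(1)]])
qed
lemma K_zero2: assumes "a \<in> K" "\<forall>s\<in>K. mul a s = z" shows "a = z"
proof -
  have "st a \<in> st ` K" using assms(1) by (rule imageI)
  hence "st a \<in> K" using Kst by blast
  hence "mul a (st a) = z" using assms(2) by blast
  thus ?thesis by (rule cstar_zero2[OF KC[OF assms(1)]])
qed

lemma sum_closed_J:
  assumes J: "J \<subseteq> I" "closedin (lcs_topology (sub_alg A I)) J"
  shows "closedin (lcs_topology A) (sumset A J K)"
  unfolding closedin_lcs
proof (intro conjI ballI impI)
  show "sumset A J K \<subseteq> Cr" unfolding sumset_def using J(1) IC KC by auto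
  fix x assume x: "x \<in> Cr" and nx: "near A (sumset A J K) x"
  obtain xi xk where xs: "xi \<in> I" "xk \<in> K" "x = add xi xk" using split[OF x] by blast
  have xC: "xi \<in> Cr" "xk \<in> Cr" using xs IC KC by auto
  have "near A J xi" unfolding near_def
  proof (intro allI impI)
    fix F e assume F: "finite F" "F \<subseteq> Sm" "(e::real) > 0"
    then obtain y where y: "y \<in> sumset A J K" "\<forall>p\<in>F. p (sub y x) < e" using nx unfolding near_def by blast
    then obtain j k where jk: "j \<in> J" "k \<in> K" "y = add j k" unfolding sumset_def by blast
    have jI: "j \<in> I" using jk J(1) by blast
    have C: "j \<in> Cr" "k \<in> Cr" using jI jk IC KC by auto
    have eq: "sub y x = add (sub j xi) (sub k xk)" using jk xs C xC by (simp add: sub_add_add)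
    have "\<forall>p\<in>F. p (sub j xi) < e"
    proof
      fix p assume pF: "p \<in> F"
      hence p: "p \<in> Sm" using F by blast
      have "p (sub j xi) \<le> p (sub y x)" unfolding eq
        using orthIK[OF p id_subt[OF Iid jI xs(1)] id_subt[OF Kid jk(2) xs(2)]] by blast
      thus "p (sub j xi) < e" using y pF by fastforce
    qed
    thus "\<exists>j\<in>J. \<forall>p\<in>F. p (sub j xi) < e" using jk by blast
  qed
  hence "xi \<in> J" using J(2) xs(1) unfolding closedin_lcs by simp
  thus "x \<in> sumset A J K" unfolding sumset_def using xs by blast
qed

lemma ann_sub: "annihilator_alg (sub_alg A I)"
  unfolding annihilator_alg_def
proof (intro conjI allI impI)
  fix J assume J: "closed_left_ideal (sub_alg A I) J"
  have Js: "subspace_l A J" "J \<subseteq> I" and Jm: "\<forall>a\<in>I. \<forall>x\<in>J. mul a x \<in> J"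
    and Jc: "closedin (lcs_topology (sub_alg A I)) J"
  proof -
    have s: "subspace_l (sub_alg A I) J" and m: "\<forall>a\<in>I. \<forall>x\<in>J. mul a x \<in> J" and c: "closedin (lcs_topology (sub_alg A I)) J"
      using J unfolding closed_left_ideal_def by auto
    have "J \<subseteq> I" using s unfolding subspace_l_def by simp
    moreover have "subspace_l A J" using s \<open>J \<subseteq> I\<close> IC unfolding subspace_l_def by auto
    ultimately show "subspace_l A J" "J \<subseteq> I" "\<forall>a\<in>I. \<forall>x\<in>J. mul a x \<in> J" "closedin (lcs_topology (sub_alg A I)) J"
      using m c by auto
  qed
  have JC: "\<And>x. x \<in> J \<Longrightarrow> x \<in> Cr" using Js IC by blast
  have zJ: "z \<in> J" using Js unfolding subspace_l_def by blast
  let ?L = "sumset A J K"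
  have r: "ran (sub_alg A I) J = {a \<in> I. \<forall>s\<in>J. mul s a = z}" unfolding ran_def by simp
  show "(ran (sub_alg A I) J = {lzero (sub_alg A I)}) = (J = lcarrier (sub_alg A I))"
    unfolding r sub_alg_simps
  proof
    assume rz: "{a \<in> I. \<forall>s\<in>J. mul s a = z} = {z}"
    have Lsub: "subspace_l A ?L" using sumset_subsp[OF Js(1) id_sub[OF Kid]] .
    have Lleft: "\<forall>a\<in>Cr. \<forall>x\<in>?L. mul a x \<in> ?L"
    proof (intro ballI)
      fix a x assume a: "a \<in> Cr" and "x \<in> ?L"
      then obtain j k where x: "j \<in> J" "k \<in> K" "x = add j k" unfolding sumset_def by blast
      obtain ai ak where as: "ai \<in> I" "ak \<in> K" "a = add ai ak" using split[OF a] by blast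
      have C: "j \<in> Cr" "k \<in> Cr" "ai \<in> Cr" "ak \<in> Cr" using x as JC KC IC by auto
      have jI: "j \<in> I" using x(1) Js(2) by blast
      have "mul a j = add (mul ai j) (mul ak j)" using as C by (simp add: distr_r)
      also have "mul ak j = z" using KI[OF jI as(2)] .
      finally have aj: "mul a j = mul ai j" using C by simp
      have "mul a x = add (mul a j) (mul a k)" using x(3) C a by (simp add: distr_l)
      hence "mul a x = add (mul ai j) (mul a k)" using aj by simp
      thus "mul a x \<in> ?L" unfolding sumset_def using Jm as x id_ml[OF Kid a x(2)] by blast
    qed
    have cli: "closed_left_ideal A ?L" unfolding closed_left_ideal_def
      using Lsub Lleft sum_closed_J[OF Js(2) Jc] by blast
    have "ran A ?L = {z}"
    proof
      show "{z} \<subseteq> ran A ?L" unfolding ran_def using Lsub unfolding subspace_l_def by auto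
      show "ran A ?L \<subseteq> {z}"
      proof
        fix x assume x: "x \<in> ran A ?L"
        have xC: "x \<in> Cr" using x unfolding ran_def by blast
        obtain xi xk where xs: "xi \<in> I" "xk \<in> K" "x = add xi xk" using split[OF xC] by blast
        have C: "xi \<in> Cr" "xk \<in> Cr" using xs IC KC by auto
        have "mul j xi = z" if j: "j \<in> J" for j
        proof -
          have "add j z \<in> ?L" unfolding sumset_def using j id_z[OF Kid] by blast
          hence "mul (add j z) x = z" using x unfolding ran_def by blast
          hence "mul j x = z" using JC[OF j] by simp
          have jI: "j \<in> I" using j Js(2) by blast
          have "mul j x = add (mul j xi) (mul j xk)" using xs(3) C JC[OF j] by (simp add: distr_l)
          also have "mul j xk = z" using IK[OF jI xs(2)] .
          finally show ?thesis using \<open>mul j x = z\<close> C JC[OF j] by simp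
        qed
        hence "xi = z" using rz xs(1) by blast
        have "mul k xk = z" if k: "k \<in> K" for k
        proof -
          have "add z k \<in> ?L" unfolding sumset_def using k zJ by blast
          hence "mul (add z k) x = z" using x unfolding ran_def by blast
          hence "mul k x = z" using KC[OF k] by simp
          have "mul k x = add (mul k xi) (mul k xk)" using xs(3) C KC[OF k] by (simp add: distr_l)
          also have "mul k xi = z" using KI[OF xs(1) k] .
          finally show ?thesis using \<open>mul k x = z\<close> C KC[OF k] by simp
        qed
        hence "xk = z" using K_zero xs(2) by blast
        thus "x \<in> {z}" using xs \<open>xi = z\<close> by simp
      qed
    qed
    hence LC: "?L = Cr" using ann cli unfolding annihilator_alg_def by blast
    show "J = I"
    proof
      show "J \<subseteq> I" using Js(2) .
      show "I \<subseteq> J"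
      proof
        fix x assume xI: "x \<in> I"
        then obtain j k where jk: "j \<in> J" "k \<in> K" "x = add j k" using LC IC unfolding sumset_def by blast
        have jI: "j \<in> I" using jk(1) Js(2) by blast
        have "add j k = add x z" using jk(3) IC[OF xI] by simp
        hence "j = x \<and> k = z" using split_unique[OF jI jk(2) xI id_z[OF Kid]] by blast
        thus "x \<in> J" using jk(1) by blast
      qed
    qed
  next
    assume "J = I"
    have "\<forall>s\<in>I. mul s z = z" using IC by simp
    thus "{a \<in> I. \<forall>s\<in>J. mul s a = z} = {z}" using ran_I_zero id_z[OF Iid] \<open>J = I\<close> by blast
  qed
next
  fix J assume J: "closed_right_ideal (sub_alg A I) J"
  have Js: "subspace_l A J" "J \<subseteq> I" and Jm: "\<forall>a\<in>I. \<forall>x\<in>J. mul x a \<in> J"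
    and Jc: "closedin (lcs_topology (sub_alg A I)) J"
  proof -
    have s: "subspace_l (sub_alg A I) J" and m: "\<forall>a\<in>I. \<forall>x\<in>J. mul x a \<in> J" and c: "closedin (lcs_topology (sub_alg A I)) J"
      using J unfolding closed_right_ideal_def by auto
    have "J \<subseteq> I" using s unfolding subspace_l_def by simp
    moreover have "subspace_l A J" using s \<open>J \<subseteq> I\<close> IC unfolding subspace_l_def by auto
    ultimately show "subspace_l A J" "J \<subseteq> I" "\<forall>a\<in>I. \<forall>x\<in>J. mul x a \<in> J" "closedin (lcs_topology (sub_alg A I)) J"
      using m c by auto
  qed
  have JC: "\<And>x. x \<in> J \<Longrightarrow> x \<in> Cr" using Js IC by blast
  have zJ: "z \<in> J" using Js unfolding subspace_l_def by blast
  let ?L = "sumset A J K"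
  have r: "lan (sub_alg A I) J = {a \<in> I. \<forall>s\<in>J. mul a s = z}" unfolding lan_def by simp
  show "(lan (sub_alg A I) J = {lzero (sub_alg A I)}) = (J = lcarrier (sub_alg A I))"
    unfolding r sub_alg_simps
  proof
    assume rz: "{a \<in> I. \<forall>s\<in>J. mul a s = z} = {z}"
    have Lsub: "subspace_l A ?L" using sumset_subsp[OF Js(1) id_sub[OF Kid]] .
    have Lright: "\<forall>a\<in>Cr. \<forall>x\<in>?L. mul x a \<in> ?L"
    proof (intro ballI)
      fix a x assume a: "a \<in> Cr" and "x \<in> ?L"
      then obtain j k where x: "j \<in> J" "k \<in> K" "x = add j k" unfolding sumset_def by blast
      obtain ai ak where as: "ai \<in> I" "ak \<in> K" "a = add ai ak" using split[OF a] by blast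
      have C: "j \<in> Cr" "k \<in> Cr" "ai \<in> Cr" "ak \<in> Cr" using x as JC KC IC by auto
      have jI: "j \<in> I" using x(1) Js(2) by blast
      have "mul j a = add (mul j ai) (mul j ak)" using as C by (simp add: distr_l)
      also have "mul j ak = z" using IK[OF jI as(2)] .
      finally have aj: "mul j a = mul j ai" using C by simp
      have "mul x a = add (mul j a) (mul k a)" using x(3) C a by (simp add: distr_r)
      hence "mul x a = add (mul j ai) (mul k a)" using aj by simp
      thus "mul x a \<in> ?L" unfolding sumset_def using Jm as x id_mr[OF Kid a x(2)] by blast
    qed
    have cri: "closed_right_ideal A ?L" unfolding closed_right_ideal_def
      using Lsub Lright sum_closed_J[OF Js(2) Jc] by blast
    have "lan A ?L = {z}"
    proof
      show "{z} \<subseteq> lan A ?L" unfolding lan_def using Lsub unfolding subspace_l_def by auto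
      show "lan A ?L \<subseteq> {z}"
      proof
        fix x assume x: "x \<in> lan A ?L"
        have xC: "x \<in> Cr" using x unfolding lan_def by blast
        obtain xi xk where xs: "xi \<in> I" "xk \<in> K" "x = add xi xk" using split[OF xC] by blast
        have C: "xi \<in> Cr" "xk \<in> Cr" using xs IC KC by auto
        have "mul xi j = z" if j: "j \<in> J" for j
        proof -
          have "add j z \<in> ?L" unfolding sumset_def using j id_z[OF Kid] by blast
          hence "mul x (add j z) = z" using x unfolding lan_def by blast
          hence "mul x j = z" using JC[OF j] by simp
          have jI: "j \<in> I" using j Js(2) by blast
          have "mul x j = add (mul xi j) (mul xk j)" using xs(3) C JC[OF j] by (simp add: distr_r)
          also have "mul xk j = z" using KI[OF jI xs(2)] .
          finally show ?thesis using \<open>mul x j = z\<close> C JC[OF j] by simp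
        qed
        hence "xi = z" using rz xs(1) by blast
        have "mul xk k = z" if k: "k \<in> K" for k
        proof -
          have "add z k \<in> ?L" unfolding sumset_def using k zJ by blast
          hence "mul x (add z k) = z" using x unfolding lan_def by blast
          hence "mul x k = z" using KC[OF k] by simp
          have "mul x k = add (mul xi k) (mul xk k)" using xs(3) C KC[OF k] by (simp add: distr_r)
          also have "mul xi k = z" using IK[OF xs(1) k] .
          finally show ?thesis using \<open>mul x k = z\<close> C KC[OF k] by simp
        qed
        hence "xk = z" using K_zero2 xs(2) by blast
        thus "x \<in> {z}" using xs \<open>xi = z\<close> by simp
      qed
    qed
    hence LC: "?L = Cr" using ann cri unfolding annihilator_alg_def by blast
    show "J = I"
    proof
      show "J \<subseteq> I" using Js(2) .
      show "I \<subseteq> J"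
      proof
        fix x assume xI: "x \<in> I"
        then obtain j k where jk: "j \<in> J" "k \<in> K" "x = add j k" using LC IC unfolding sumset_def by blast
        have jI: "j \<in> I" using jk(1) Js(2) by blast
        have "add j k = add x z" using jk(3) IC[OF xI] by simp
        hence "j = x \<and> k = z" using split_unique[OF jI jk(2) xI id_z[OF Kid]] by blast
        thus "x \<in> J" using jk(1) by blast
      qed
    qed
  next
    assume "J = I"
    have "\<forall>s\<in>I. mul z s = z" using IC by simp
    thus "{a \<in> I. \<forall>s\<in>J. mul a s = z} = {z}" using lan_I_zero id_z[OF Iid] \<open>J = I\<close> by blast
  qed
qed

lemma alc_sub: "annihilator_locally_cstar (sub_alg A I)"
  unfolding annihilator_locally_cstar_def
  using lc_sub[OF id_sub[OF Iid] _ Ist Icl] ann_sub id_ml[OF Iid] IC by blast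

end


lemma fin_est:
  fixes a :: "'p \<Rightarrow> 'w \<Rightarrow> real" and b :: "'q \<Rightarrow> 'w \<Rightarrow> real"
  assumes F: "finite F" and e: "e > 0"
    and est: "\<forall>p\<in>F. \<exists>G. finite G \<and> G \<subseteq> Q \<and> (\<forall>w\<in>W. a p w \<le> 2 * (\<Sum>q\<in>G. b q w))"
  shows "\<exists>G' d. finite G' \<and> G' \<subseteq> Q \<and> d > 0 \<and> (\<forall>w\<in>W. (\<forall>q\<in>G'. b q w < d) \<longrightarrow> (\<forall>p\<in>F. a p w < e))"
proof -
  obtain Gf where Gf: "\<forall>p\<in>F. finite (Gf p) \<and> Gf p \<subseteq> Q \<and> (\<forall>w\<in>W. a p w \<le> 2 * (\<Sum>q\<in>Gf p. b q w))"
    using bchoice[OF est] by blast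
  define G' where "G' = \<Union> (Gf ` F)"
  define d where "d = e / (2 * real (card G') + 1)"
  have fG: "finite G'" unfolding G'_def using F Gf by auto
  have sG: "G' \<subseteq> Q" unfolding G'_def using Gf by auto
  have d: "d > 0" unfolding d_def using e by simp
  have "\<forall>w\<in>W. (\<forall>q\<in>G'. b q w < d) \<longrightarrow> (\<forall>p\<in>F. a p w < e)"
  proof (intro ballI impI)
    fix w p assume w: "w \<in> W" and small: "\<forall>q\<in>G'. b q w < d" and p: "p \<in> F"
    have sub: "Gf p \<subseteq> G'" unfolding G'_def using p by blast
    have "a p w \<le> 2 * (\<Sum>q\<in>Gf p. b q w)" using Gf p w by blast
    also have "\<dots> \<le> 2 * (\<Sum>q\<in>Gf p. d)" using small sub by (intro mult_left_mono sum_mono) (auto simp: less_imp_le)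
    also have "\<dots> = 2 * real (card (Gf p)) * d" by simp
    also have "\<dots> \<le> 2 * real (card G') * d" using card_mono[OF fG sub] d by (simp add: mult_right_mono)
    also have "\<dots> < e" unfolding d_def using e by (simp add: field_simps)
    finally show "a p w < e" .
  qed
  thus ?thesis using fG sG d by blast
qed

lemma homeo_est:
  assumes bij: "bij_betw f (lcarrier B) (lcarrier C)"
    and E1: "\<forall>q\<in>lsemis C. \<exists>F. finite F \<and> F \<subseteq> lsemis B \<and>
        (\<forall>x\<in>lcarrier B. \<forall>y\<in>lcarrier B. q (lsub C (f y) (f x)) \<le> 2 * (\<Sum>p\<in>F. p (lsub B y x)))"
    and E2: "\<forall>p\<in>lsemis B. \<exists>G. finite G \<and> G \<subseteq> lsemis C \<and>
        (\<forall>x\<in>lcarrier B. \<forall>y\<in>lcarrier B. p (lsub B y x) \<le> 2 * (\<Sum>q\<in>G. q (lsub C (f y) (f x))))"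
  shows "homeomorphic_map (lcs_topology B) (lcs_topology C) f"
proof (rule bijective_open_imp_homeomorphic_map)
  have img: "f ` lcarrier B = lcarrier C" and inj: "inj_on f (lcarrier B)" using bij unfolding bij_betw_def by auto
  show "f ` topspace (lcs_topology B) = topspace (lcs_topology C)" using img by simp
  show "inj_on f (topspace (lcs_topology B))" using inj by simp
  show "continuous_map (lcs_topology B) (lcs_topology C) f"
    unfolding continuous_map topspace_lcs openin_lcs
  proof (intro conjI allI impI)
    show "f ` lcarrier B \<subseteq> lcarrier C" using img by simp
    fix U assume U: "lcs_open C U"
    show "lcs_open B {x \<in> lcarrier B. f x \<in> U}" unfolding lcs_open_def
    proof (intro conjI ballI)
      show "{x \<in> lcarrier B. f x \<in> U} \<subseteq> lcarrier B" by blast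
      fix x assume x: "x \<in> {x \<in> lcarrier B. f x \<in> U}"
      then obtain F e where F: "finite F" "F \<subseteq> lsemis C" "e > 0"
        "{y \<in> lcarrier C. \<forall>p\<in>F. p (lsub C y (f x)) < e} \<subseteq> U"
        using U unfolding lcs_open_def by blast
      have "\<forall>q\<in>F. \<exists>G. finite G \<and> G \<subseteq> lsemis B \<and>
          (\<forall>y\<in>lcarrier B. q (lsub C (f y) (f x)) \<le> 2 * (\<Sum>p\<in>G. p (lsub B y x)))"
      proof
        fix q assume "q \<in> F"
        hence "q \<in> lsemis C" using F(2) by blast
        from E1[rule_format, OF this] obtain G where G: "finite G" "G \<subseteq> lsemis B"
          "\<forall>x\<in>lcarrier B. \<forall>y\<in>lcarrier B. q (lsub C (f y) (f x)) \<le> 2 * (\<Sum>p\<in>G. p (lsub B y x))" by blast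
        have "x \<in> lcarrier B" using x by blast
        hence "\<forall>y\<in>lcarrier B. q (lsub C (f y) (f x)) \<le> 2 * (\<Sum>p\<in>G. p (lsub B y x))" using G(3) by blast
        thus "\<exists>G. finite G \<and> G \<subseteq> lsemis B \<and> (\<forall>y\<in>lcarrier B. q (lsub C (f y) (f x)) \<le> 2 * (\<Sum>p\<in>G. p (lsub B y x)))"
          using G(1,2) by blast
      qed
      from fin_est[OF F(1) F(3) this] obtain G d where G: "finite G" "G \<subseteq> lsemis B" "d > 0"
        "\<forall>y\<in>lcarrier B. (\<forall>p\<in>G. p (lsub B y x) < d) \<longrightarrow> (\<forall>q\<in>F. q (lsub C (f y) (f x)) < e)"
        by blast
      have "{y \<in> lcarrier B. \<forall>p\<in>G. p (lsub B y x) < d} \<subseteq> {x \<in> lcarrier B. f x \<in> U}"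
      proof
        fix y assume y: "y \<in> {y \<in> lcarrier B. \<forall>p\<in>G. p (lsub B y x) < d}"
        hence yB: "y \<in> lcarrier B" "\<forall>p\<in>G. p (lsub B y x) < d" by auto
        have "f y \<in> lcarrier C" using yB(1) img by blast
        moreover have "\<forall>q\<in>F. q (lsub C (f y) (f x)) < e" using G(4) yB by blast
        ultimately have "f y \<in> lcarrier C" "\<forall>q\<in>F. q (lsub C (f y) (f x)) < e" by auto
        hence "f y \<in> U" using F(4) by blast
        thus "y \<in> {x \<in> lcarrier B. f x \<in> U}" using y by blast
      qed
      thus "\<exists>F e. finite F \<and> F \<subseteq> lsemis B \<and> 0 < e \<and> {y \<in> lcarrier B. \<forall>p\<in>F. p (lsub B y x) < e} \<subseteq> {x \<in> lcarrier B. f x \<in> U}"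
        using G by blast
    qed
  qed
  show "open_map (lcs_topology B) (lcs_topology C) f"
    unfolding open_map_def openin_lcs
  proof (intro allI impI)
    fix U assume U: "lcs_open B U"
    have UB: "U \<subseteq> lcarrier B" using U unfolding lcs_open_def by blast
    show "lcs_open C (f ` U)" unfolding lcs_open_def
    proof (intro conjI ballI)
      show "f ` U \<subseteq> lcarrier C" using UB img by blast
      fix Y assume "Y \<in> f ` U"
      then obtain x where x: "x \<in> U" "Y = f x" by blast
      then obtain F e where F: "finite F" "F \<subseteq> lsemis B" "e > 0"
        "{y \<in> lcarrier B. \<forall>p\<in>F. p (lsub B y x) < e} \<subseteq> U"
        using U unfolding lcs_open_def by blast
      have xB: "x \<in> lcarrier B" using x UB by blast
      have "\<forall>p\<in>F. \<exists>G. finite G \<and> G \<subseteq> lsemis C \<and>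
          (\<forall>y\<in>lcarrier B. p (lsub B y x) \<le> 2 * (\<Sum>q\<in>G. q (lsub C (f y) (f x))))"
      proof
        fix p assume "p \<in> F"
        hence "p \<in> lsemis B" using F(2) by blast
        from E2[rule_format, OF this] obtain G where G: "finite G" "G \<subseteq> lsemis C"
          "\<forall>x\<in>lcarrier B. \<forall>y\<in>lcarrier B. p (lsub B y x) \<le> 2 * (\<Sum>q\<in>G. q (lsub C (f y) (f x)))" by blast
        hence "\<forall>y\<in>lcarrier B. p (lsub B y x) \<le> 2 * (\<Sum>q\<in>G. q (lsub C (f y) (f x)))" using xB by blast
        thus "\<exists>G. finite G \<and> G \<subseteq> lsemis C \<and> (\<forall>y\<in>lcarrier B. p (lsub B y x) \<le> 2 * (\<Sum>q\<in>G. q (lsub C (f y) (f x))))"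
          using G(1,2) by blast
      qed
      from fin_est[OF F(1) F(3) this] obtain G d where G: "finite G" "G \<subseteq> lsemis C" "d > 0"
        "\<forall>y\<in>lcarrier B. (\<forall>q\<in>G. q (lsub C (f y) (f x)) < d) \<longrightarrow> (\<forall>p\<in>F. p (lsub B y x) < e)"
        by blast
      have "{Y' \<in> lcarrier C. \<forall>q\<in>G. q (lsub C Y' Y) < d} \<subseteq> f ` U"
      proof
        fix Y' assume Y': "Y' \<in> {Y' \<in> lcarrier C. \<forall>q\<in>G. q (lsub C Y' Y) < d}"
        have "Y' \<in> f ` lcarrier B" using Y' img by simp
        then obtain y where y: "y \<in> lcarrier B" "Y' = f y" by blast
        have "\<forall>q\<in>G. q (lsub C (f y) (f x)) < d" using Y' x(2) y(2) by simp
        hence "\<forall>p\<in>F. p (lsub B y x) < e" using G(4) y(1) by blast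
        hence "y \<in> U" using F(4) y(1) by blast
        thus "Y' \<in> f ` U" using y(2) by blast
      qed
      thus "\<exists>F e. finite F \<and> F \<subseteq> lsemis C \<and> 0 < e \<and> {y \<in> lcarrier C. \<forall>p\<in>F. p (lsub C y Y) < e} \<subseteq> f ` U"
        using G by blast
    qed
  qed
qed



locale ISO = LC B for B :: "'a lcs_alg" +
  fixes C :: "'b lcs_alg" and f :: "'a \<Rightarrow> 'b"
  assumes bij: "bij_betw f (lcarrier B) (lcarrier C)"
    and fz: "f (lzero B) = lzero C"
    and fadd: "\<And>x y. x \<in> lcarrier B \<Longrightarrow> y \<in> lcarrier B \<Longrightarrow> f (ladd B x y) = ladd C (f x) (f y)"
    and fsm: "\<And>c x. x \<in> lcarrier B \<Longrightarrow> f (lsmult B c x) = lsmult C c (f x)"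
    and fmul: "\<And>x y. x \<in> lcarrier B \<Longrightarrow> y \<in> lcarrier B \<Longrightarrow> f (lmult B x y) = lmult C (f x) (f y)"
    and fst: "\<And>x. x \<in> lcarrier B \<Longrightarrow> f (lstar B x) = lstar C (f x)"
    and semi1: "\<And>p. p \<in> lsemis B \<Longrightarrow> \<exists>q\<in>lsemis C. \<forall>x\<in>lcarrier B. q (f x) = p x"
    and semi2: "\<And>q. q \<in> lsemis C \<Longrightarrow> \<exists>p\<in>lsemis B. \<forall>x\<in>lcarrier B. q (f x) = p x"
begin

abbreviation "CC \<equiv> lcarrier C"

lemma img: "f ` Cr = CC" using bij unfolding bij_betw_def by blast
lemma inj: "inj_on f Cr" using bij unfolding bij_betw_def by blast
lemma f_in: "x \<in> Cr \<Longrightarrow> f x \<in> CC" using img by blast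
lemma f_eq: "x \<in> Cr \<Longrightarrow> y \<in> Cr \<Longrightarrow> f x = f y \<longleftrightarrow> x = y" using inj unfolding inj_on_def by blast
lemma ballC: "(\<forall>X\<in>CC. P X) \<longleftrightarrow> (\<forall>x\<in>Cr. P (f x))" unfolding img[symmetric] by blast
lemma fsub: "x \<in> Cr \<Longrightarrow> y \<in> Cr \<Longrightarrow> f (sub x y) = lsub C (f x) (f y)"
  unfolding lsub_def by (simp add: fadd fsm)

lemmas frules = fadd[symmetric] fsm[symmetric] fmul[symmetric] fst[symmetric] fz[symmetric] fsub[symmetric]

lemma star_alg_C: "star_alg C"
  unfolding star_alg_def ballC
  apply (simp only: frules)
  apply (intro conjI allI ballI)
  apply (simp_all add: frules f_in add_assoc add_neg sm_add_scalar sm_add mul_assoc distr_r distr_l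
      sm_mul_l sm_mul_r st_add st_sm st_mul)
  apply (rule arg_cong[where f=f], rule add_comm; simp)
  done

lemma csn_C: assumes q: "q \<in> lsemis C" shows "cstar_seminorm C q"
proof -
  obtain p where p: "p \<in> Sm" "\<And>x. x \<in> Cr \<Longrightarrow> q (f x) = p x" using semi2[OF q] by blast
  show ?thesis unfolding cstar_seminorm_def ballC
    by (simp add: frules p p_nonneg p_add p_sm p_mul p_cstar)
qed

lemma lc_C: "locally_cstar C"
  unfolding locally_cstar_def
proof (intro conjI ballI allI impI)
  show "star_alg C" by (rule star_alg_C)
  show "cstar_seminorm C q" if "q \<in> lsemis C" for q using csn_C that .
  fix X assume X: "X \<in> CC" and h: "\<forall>q\<in>lsemis C. q X = 0"
  obtain x where x: "x \<in> Cr" "X = f x" using X img by blast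
  have "x = z"
  proof (rule hausdorff[OF x(1)])
    fix p assume "p \<in> Sm"
    then obtain q where q: "q \<in> lsemis C" "\<forall>x\<in>Cr. q (f x) = p x" using semi1 by blast
    thus "p x = 0" using h x by auto
  qed
  thus "X = lzero C" using x fz by simp
next
  fix F :: "'b filter"
  assume nb: "F \<noteq> bot" and evC: "eventually (\<lambda>X. X \<in> CC) F"
    and ca: "\<forall>q\<in>lsemis C. \<forall>e>0. eventually (\<lambda>(X, Y). q (lsub C X Y) < e) (F \<times>\<^sub>F F)"
  define g where "g = inv_into Cr f"
  have g_in: "\<And>X. X \<in> CC \<Longrightarrow> g X \<in> Cr" unfolding g_def using img inv_into_into by metis
  have fg: "\<And>X. X \<in> CC \<Longrightarrow> f (g X) = X" unfolding g_def using img f_inv_into_f by metis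
  define G where "G = filtermap g F"
  have Gnb: "G \<noteq> bot" unfolding G_def using nb by (simp add: filtermap_bot_iff)
  have evG: "eventually (\<lambda>x. x \<in> Cr) G" unfolding G_def eventually_filtermap
    using evC by (auto elim: eventually_mono intro: g_in)
  have cauchy: "\<forall>p\<in>Sm. \<forall>e>0. eventually (\<lambda>(a, b). p (sub a b) < e) (G \<times>\<^sub>F G)"
  proof (intro ballI allI impI)
    fix p e assume p: "p \<in> Sm" and e: "(e::real) > 0"
    obtain q where q: "q \<in> lsemis C" "\<forall>x\<in>Cr. q (f x) = p x" using semi1[OF p] by blast
    have "eventually (\<lambda>(X, Y). q (lsub C X Y) < e) (F \<times>\<^sub>F F)" using ca q(1) e by blast
    then obtain Q where Q: "eventually Q F" "\<forall>X Y. Q X \<longrightarrow> Q Y \<longrightarrow> q (lsub C X Y) < e"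
      unfolding eventually_prod_same by auto
    define Q' where "Q' = (\<lambda>a. \<exists>X. Q X \<and> X \<in> CC \<and> g X = a)"
    have "eventually Q' G" unfolding G_def eventually_filtermap Q'_def
      using eventually_conj[OF Q(1) evC] by (auto elim: eventually_mono)
    moreover have "p (sub a b) < e" if qa: "Q' a" and qb: "Q' b" for a b
    proof -
      obtain X where X: "Q X" "X \<in> CC" "g X = a" using qa unfolding Q'_def by blast
      obtain Y where Y: "Q Y" "Y \<in> CC" "g Y = b" using qb unfolding Q'_def by blast
      have ab: "a \<in> Cr" "b \<in> Cr" using X Y g_in by auto
      have "p (sub a b) = q (f (sub a b))" using q(2) ab by simp
      also have "\<dots> = q (lsub C X Y)" using fsub[OF ab] X(3) Y(3) fg[OF X(2)] fg[OF Y(2)] by auto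
      finally show ?thesis using Q(2) X(1) Y(1) by simp
    qed
    ultimately show "eventually (\<lambda>(a, b). p (sub a b) < e) (G \<times>\<^sub>F G)"
      unfolding eventually_prod_same by blast
  qed
  obtain x0 where x0: "x0 \<in> Cr" "\<forall>p\<in>Sm. \<forall>e>0. eventually (\<lambda>y. p (sub y x0) < e) G"
    using complete[OF Gnb evG cauchy] by blast
  have "\<forall>q\<in>lsemis C. \<forall>e>0. eventually (\<lambda>Y. q (lsub C Y (f x0)) < e) F"
  proof (intro ballI allI impI)
    fix q e assume q: "q \<in> lsemis C" and e: "(e::real) > 0"
    obtain p where p: "p \<in> Sm" "\<forall>x\<in>Cr. q (f x) = p x" using semi2[OF q] by blast
    have "eventually (\<lambda>y. p (sub y x0) < e) G" using x0(2) p(1) e by blast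
    hence "eventually (\<lambda>Y. p (sub (g Y) x0) < e) F" unfolding G_def eventually_filtermap .
    thus "eventually (\<lambda>Y. q (lsub C Y (f x0)) < e) F"
    proof (rule eventually_rev_mp[OF _ eventually_mono[OF evC]])
      fix Y assume Y: "Y \<in> CC"
      have "q (lsub C Y (f x0)) = q (f (sub (g Y) x0))" using fsub[OF g_in[OF Y] x0(1)] fg[OF Y] by simp
      also have "\<dots> = p (sub (g Y) x0)" using p(2) g_in[OF Y] x0(1) by simp
      finally show "p (sub (g Y) x0) < e \<longrightarrow> q (lsub C Y (f x0)) < e" by simp
    qed
  qed
  thus "\<exists>X\<in>CC. \<forall>q\<in>lsemis C. \<forall>e>0. eventually (\<lambda>Y. q (lsub C Y X) < e) F"
    using f_in[OF x0(1)] by blast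
qed

end


context ISO
begin

lemma img_eq_single: assumes "R \<subseteq> Cr" shows "f ` R = {f z} \<longleftrightarrow> R = {z}"
proof
  assume h: "f ` R = {f z}"
  show "R = {z}"
  proof
    show "R \<subseteq> {z}"
    proof
      fix x assume x: "x \<in> R"
      have "f x \<in> f ` R" using x by (rule imageI)
      hence "f x = f z" unfolding h by simp
      moreover have "x \<in> Cr" using x assms by (rule rev_subsetD)
      ultimately have "x = z" using f_eq[of x z] by simp
      thus "x \<in> {z}" by simp
    qed
    have "f z \<in> f ` R" unfolding h by simp
    then obtain r where r: "r \<in> R" "f r = f z" by (rule imageE) simp
    have "r \<in> Cr" using r(1) assms by (rule rev_subsetD)
    hence "r = z" using f_eq[of r z] r(2) by simp
    thus "{z} \<subseteq> R" using r by simp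
  qed
next
  assume "R = {z}" thus "f ` R = {f z}" by simp
qed

lemma near_transfer:
  assumes x: "x \<in> Cr" and n: "near B J' x" and J': "\<And>j. j \<in> J' \<Longrightarrow> j \<in> Cr \<and> f j \<in> J"
  shows "near C J (f x)"
  unfolding near_def
proof (intro allI impI)
  fix F e assume F: "finite F" "F \<subseteq> lsemis C" "(e::real) > 0"
  have "\<forall>q\<in>lsemis C. \<exists>p. p \<in> Sm \<and> (\<forall>x\<in>Cr. q (f x) = p x)"
  proof
    fix q assume "q \<in> lsemis C"
    from semi2[OF this] obtain p where "p \<in> Sm" "\<forall>x\<in>Cr. q (f x) = p x" by blast
    thus "\<exists>p. p \<in> Sm \<and> (\<forall>x\<in>Cr. q (f x) = p x)" by blast
  qed
  from bchoice[OF this] obtain \<phi> where \<phi>: "\<forall>q\<in>lsemis C. \<phi> q \<in> Sm \<and> (\<forall>x\<in>Cr. q (f x) = \<phi> q x)"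
    by blast
  have "finite (\<phi> ` F)" "\<phi> ` F \<subseteq> Sm" using F \<phi> by auto
  then obtain j where j: "j \<in> J'" "\<forall>p\<in>\<phi> ` F. p (sub j x) < e" using n F(3) unfolding near_def by blast
  have jC: "j \<in> Cr" "f j \<in> J" using J' j(1) by auto
  have "\<forall>q\<in>F. q (lsub C (f j) (f x)) < e"
  proof
    fix q assume qF: "q \<in> F"
    hence q: "q \<in> lsemis C" using F by blast
    have "q (lsub C (f j) (f x)) = q (f (sub j x))" using fsub[OF jC(1) x] by simp
    also have "\<dots> = \<phi> q (sub j x)" using \<phi> q jC(1) x by simp
    finally show "q (lsub C (f j) (f x)) < e" using j(2) qF by simp
  qed
  thus "\<exists>j\<in>J. \<forall>q\<in>F. q (lsub C j (f x)) < e" using jC(2) by blast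
qed

lemma pre: "X \<in> CC \<Longrightarrow> \<exists>x\<in>Cr. X = f x"
proof -
  assume "X \<in> CC"
  hence "X \<in> f ` Cr" using img by simp
  thus ?thesis by blast
qed

lemma ann_C: assumes annB: "annihilator_alg B" shows "annihilator_alg C"
  unfolding annihilator_alg_def
proof (intro conjI allI impI)
  fix J assume J: "closed_left_ideal C J"
  have Jsub: "J \<subseteq> CC" and Jz: "lzero C \<in> J" and Jadd: "\<forall>X\<in>J. \<forall>Y\<in>J. ladd C X Y \<in> J"
    and Jsm: "\<forall>c. \<forall>X\<in>J. lsmult C c X \<in> J" and Jm: "\<forall>a\<in>CC. \<forall>X\<in>J. lmult C a X \<in> J"
    and Jc: "closedin (lcs_topology C) J"
  proof -
    have s: "subspace_l C J" and m: "\<forall>a\<in>CC. \<forall>X\<in>J. lmult C a X \<in> J" and c: "closedin (lcs_topology C) J"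
      using J unfolding closed_left_ideal_def by blast+
    from s have "J \<subseteq> CC" "lzero C \<in> J" "\<forall>X\<in>J. \<forall>Y\<in>J. ladd C X Y \<in> J" "\<forall>c. \<forall>X\<in>J. lsmult C c X \<in> J"
      unfolding subspace_l_def by blast+
    thus "J \<subseteq> CC" "lzero C \<in> J" "\<forall>X\<in>J. \<forall>Y\<in>J. ladd C X Y \<in> J" "\<forall>c. \<forall>X\<in>J. lsmult C c X \<in> J"
      "\<forall>a\<in>CC. \<forall>X\<in>J. lmult C a X \<in> J" "closedin (lcs_topology C) J" using m c by blast+
  qed
  define J' where "J' = {x \<in> Cr. f x \<in> J}"
  have J'C: "\<And>j. j \<in> J' \<Longrightarrow> j \<in> Cr \<and> f j \<in> J" unfolding J'_def by blast
  have cli: "closed_left_ideal B J'" unfolding closed_left_ideal_def subspace_l_def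
  proof (intro conjI ballI allI)
    show "J' \<subseteq> Cr" unfolding J'_def by blast
    show "z \<in> J'" unfolding J'_def using Jz fz by simp
    fix x assume x: "x \<in> J'"
    hence xC: "x \<in> Cr" "f x \<in> J" unfolding J'_def by auto
    { fix y assume "y \<in> J'"
      hence yC: "y \<in> Cr" "f y \<in> J" unfolding J'_def by auto
      show "add x y \<in> J'" unfolding J'_def using xC yC Jadd fadd by simp }
    { fix c show "sm c x \<in> J'" unfolding J'_def using xC Jsm fsm by simp }
    { fix a assume a: "a \<in> Cr"
      show "mul a x \<in> J'" unfolding J'_def using xC a Jm fmul f_in by simp }
  next
    show "closedin (lcs_topology B) J'" unfolding closedin_lcs
    proof (intro conjI ballI impI)
      show "J' \<subseteq> Cr" unfolding J'_def by blast
      fix x assume x: "x \<in> Cr" and n: "near B J' x"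
      have "near C J (f x)" by (rule near_transfer[OF x n J'C])
      hence "f x \<in> J" using Jc f_in[OF x] unfolding closedin_lcs by blast
      thus "x \<in> J'" unfolding J'_def using x by blast
    qed
  qed
  have JJ': "J = f ` J'"
  proof
    show "J \<subseteq> f ` J'"
    proof
      fix X assume X: "X \<in> J"
      have "X \<in> CC" using Jsub X by (rule subsetD)
      then obtain x where x: "x \<in> Cr" "X = f x" using pre by blast
      thus "X \<in> f ` J'" unfolding J'_def using X by blast
    qed
    show "f ` J' \<subseteq> J" unfolding J'_def by blast
  qed
  have ranrel: "ran C J = f ` ran B J'"
  proof
    show "ran C J \<subseteq> f ` ran B J'"
    proof
      fix X assume X: "X \<in> ran C J"
      hence XC: "X \<in> CC" and XJ: "\<forall>S\<in>J. lmult C S X = lzero C" unfolding ran_def by auto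
      obtain x where x: "x \<in> Cr" "X = f x" using pre[OF XC] by blast
      have "\<forall>s\<in>J'. mul s x = z"
      proof
        fix s assume s: "s \<in> J'"
        hence sC: "s \<in> Cr" "f s \<in> J" unfolding J'_def by auto
        have "f (mul s x) = f z" using XJ sC fmul[OF sC(1) x(1)] x(2) fz by simp
        thus "mul s x = z" using f_eq sC(1) x(1) by simp
      qed
      hence "x \<in> ran B J'" unfolding ran_def using x(1) by blast
      thus "X \<in> f ` ran B J'" using x(2) by simp
    qed
    show "f ` ran B J' \<subseteq> ran C J"
    proof
      fix X assume "X \<in> f ` ran B J'"
      then obtain x where x0: "x \<in> ran B J'" "X = f x" by (rule imageE) simp
      hence x: "x \<in> Cr" "\<forall>s\<in>J'. mul s x = z" "X = f x" unfolding ran_def by auto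
      have "\<forall>S\<in>J. lmult C S X = lzero C"
      proof
        fix S assume "S \<in> J"
        hence "S \<in> f ` J'" using JJ' by simp
        then obtain s where s: "s \<in> J'" "S = f s" by (rule imageE) simp
        have sC: "s \<in> Cr" using s(1) unfolding J'_def by blast
        have "lmult C S X = f (mul s x)" using s(2) x(3) fmul[OF sC x(1)] by simp
        thus "lmult C S X = lzero C" using x(2) s(1) fz by simp
      qed
      thus "X \<in> ran C J" unfolding ran_def using x f_in by simp
    qed
  qed
  have "ran C J = {lzero C} \<longleftrightarrow> ran B J' = {z}"
    unfolding ranrel fz[symmetric] by (rule img_eq_single) (auto simp: ran_def)
  also have "\<dots> \<longleftrightarrow> J' = Cr"
  proof -
    have "\<forall>J. closed_left_ideal B J \<longrightarrow> (ran B J = {z} \<longleftrightarrow> J = Cr)"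
      using annB unfolding annihilator_alg_def by (rule conjunct1)
    thus ?thesis using cli by blast
  qed
  also have "\<dots> \<longleftrightarrow> J = CC"
  proof
    assume "J' = Cr" thus "J = CC" using JJ' img by simp
  next
    assume "J = CC" thus "J' = Cr" unfolding J'_def using f_in by auto
  qed
  finally show "(ran C J = {lzero C}) = (J = CC)" .
next
  fix J assume J: "closed_right_ideal C J"
  have Jsub: "J \<subseteq> CC" and Jz: "lzero C \<in> J" and Jadd: "\<forall>X\<in>J. \<forall>Y\<in>J. ladd C X Y \<in> J"
    and Jsm: "\<forall>c. \<forall>X\<in>J. lsmult C c X \<in> J" and Jm: "\<forall>a\<in>CC. \<forall>X\<in>J. lmult C X a \<in> J"
    and Jc: "closedin (lcs_topology C) J"
  proof -
    have s: "subspace_l C J" and m: "\<forall>a\<in>CC. \<forall>X\<in>J. lmult C X a \<in> J" and c: "closedin (lcs_topology C) J"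
      using J unfolding closed_right_ideal_def by blast+
    from s have "J \<subseteq> CC" "lzero C \<in> J" "\<forall>X\<in>J. \<forall>Y\<in>J. ladd C X Y \<in> J" "\<forall>c. \<forall>X\<in>J. lsmult C c X \<in> J"
      unfolding subspace_l_def by blast+
    thus "J \<subseteq> CC" "lzero C \<in> J" "\<forall>X\<in>J. \<forall>Y\<in>J. ladd C X Y \<in> J" "\<forall>c. \<forall>X\<in>J. lsmult C c X \<in> J"
      "\<forall>a\<in>CC. \<forall>X\<in>J. lmult C X a \<in> J" "closedin (lcs_topology C) J" using m c by blast+
  qed
  define J' where "J' = {x \<in> Cr. f x \<in> J}"
  have J'C: "\<And>j. j \<in> J' \<Longrightarrow> j \<in> Cr \<and> f j \<in> J" unfolding J'_def by blast
  have cri: "closed_right_ideal B J'" unfolding closed_right_ideal_def subspace_l_def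
  proof (intro conjI ballI allI)
    show "J' \<subseteq> Cr" unfolding J'_def by blast
    show "z \<in> J'" unfolding J'_def using Jz fz by simp
    fix x assume x: "x \<in> J'"
    hence xC: "x \<in> Cr" "f x \<in> J" unfolding J'_def by auto
    { fix y assume "y \<in> J'"
      hence yC: "y \<in> Cr" "f y \<in> J" unfolding J'_def by auto
      show "add x y \<in> J'" unfolding J'_def using xC yC Jadd fadd by simp }
    { fix c show "sm c x \<in> J'" unfolding J'_def using xC Jsm fsm by simp }
    { fix a assume a: "a \<in> Cr"
      show "mul x a \<in> J'" unfolding J'_def using xC a Jm fmul f_in by simp }
  next
    show "closedin (lcs_topology B) J'" unfolding closedin_lcs
    proof (intro conjI ballI impI)
      show "J' \<subseteq> Cr" unfolding J'_def by blast
      fix x assume x: "x \<in> Cr" and n: "near B J' x"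
      have "near C J (f x)" by (rule near_transfer[OF x n J'C])
      hence "f x \<in> J" using Jc f_in[OF x] unfolding closedin_lcs by blast
      thus "x \<in> J'" unfolding J'_def using x by blast
    qed
  qed
  have JJ': "J = f ` J'"
  proof
    show "J \<subseteq> f ` J'"
    proof
      fix X assume X: "X \<in> J"
      have "X \<in> CC" using Jsub X by (rule subsetD)
      then obtain x where x: "x \<in> Cr" "X = f x" using pre by blast
      thus "X \<in> f ` J'" unfolding J'_def using X by blast
    qed
    show "f ` J' \<subseteq> J" unfolding J'_def by blast
  qed
  have lanrel: "lan C J = f ` lan B J'"
  proof
    show "lan C J \<subseteq> f ` lan B J'"
    proof
      fix X assume X: "X \<in> lan C J"
      hence XC: "X \<in> CC" and XJ: "\<forall>S\<in>J. lmult C X S = lzero C" unfolding lan_def by auto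
      obtain x where x: "x \<in> Cr" "X = f x" using pre[OF XC] by blast
      have "\<forall>s\<in>J'. mul x s = z"
      proof
        fix s assume s: "s \<in> J'"
        hence sC: "s \<in> Cr" "f s \<in> J" unfolding J'_def by auto
        have "f (mul x s) = f z" using XJ sC fmul[OF x(1) sC(1)] x(2) fz by simp
        thus "mul x s = z" using f_eq sC(1) x(1) by simp
      qed
      hence "x \<in> lan B J'" unfolding lan_def using x(1) by blast
      thus "X \<in> f ` lan B J'" using x(2) by simp
    qed
    show "f ` lan B J' \<subseteq> lan C J"
    proof
      fix X assume "X \<in> f ` lan B J'"
      then obtain x where x0: "x \<in> lan B J'" "X = f x" by (rule imageE) simp
      hence x: "x \<in> Cr" "\<forall>s\<in>J'. mul x s = z" "X = f x" unfolding lan_def by auto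
      have "\<forall>S\<in>J. lmult C X S = lzero C"
      proof
        fix S assume "S \<in> J"
        hence "S \<in> f ` J'" using JJ' by simp
        then obtain s where s: "s \<in> J'" "S = f s" by (rule imageE) simp
        have sC: "s \<in> Cr" using s(1) unfolding J'_def by blast
        have "lmult C X S = f (mul x s)" using s(2) x(3) fmul[OF x(1) sC] by simp
        thus "lmult C X S = lzero C" using x(2) s(1) fz by simp
      qed
      thus "X \<in> lan C J" unfolding lan_def using x f_in by simp
    qed
  qed
  have "lan C J = {lzero C} \<longleftrightarrow> lan B J' = {z}"
    unfolding lanrel fz[symmetric] by (rule img_eq_single) (auto simp: lan_def)
  also have "\<dots> \<longleftrightarrow> J' = Cr"
  proof -
    have "\<forall>J. closed_right_ideal B J \<longrightarrow> (lan B J = {z} \<longleftrightarrow> J = Cr)"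
      using annB unfolding annihilator_alg_def by (rule conjunct2)
    thus ?thesis using cri by blast
  qed
  also have "\<dots> \<longleftrightarrow> J = CC"
  proof
    assume "J' = Cr" thus "J = CC" using JJ' img by simp
  next
    assume "J = CC" thus "J' = Cr" unfolding J'_def using f_in by auto
  qed
  finally show "(lan C J = {lzero C}) = (J = CC)" .
qed

end


lemma quot_simps[simp]:
  "lcarrier (quot_alg A I) = coset_l A I ` lcarrier A"
  "lzero (quot_alg A I) = coset_l A I (lzero A)"
  "ladd (quot_alg A I) X Y = coset_l A I (ladd A (rep_l X) (rep_l Y))"
  "lsmult (quot_alg A I) c X = coset_l A I (lsmult A c (rep_l X))"
  "lmult (quot_alg A I) X Y = coset_l A I (lmult A (rep_l X) (rep_l Y))"
  "lstar (quot_alg A I) X = coset_l A I (lstar A (rep_l X))"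
  "lsemis (quot_alg A I) = {(\<lambda>X. Inf (p ` X)) | p. p \<in> lsemis A}"
  unfolding quot_alg_def by simp_all

context SPL
begin

abbreviation "cs \<equiv> coset_l A I"

lemma cs_mem: "y \<in> cs x \<longleftrightarrow> (\<exists>i\<in>I. y = add x i)" unfolding coset_l_def by blast

lemma self_cs: "x \<in> Cr \<Longrightarrow> x \<in> cs x" unfolding cs_mem using id_z[OF Iid] by force

lemma cs_sub: assumes "x \<in> Cr" "y \<in> cs x" shows "y \<in> Cr" "sub y x \<in> I"
proof -
  obtain i where i: "i \<in> I" "y = add x i" using assms(2) cs_mem by blast
  have iC: "i \<in> Cr" using IC i(1) .
  have "add x i \<in> Cr" using assms(1) iC by simp
  thus "y \<in> Cr" using i(2) by simp
  have "i = sub y x" by (rule sub_add_eq[OF assms(1) iC]) (use i assms(1) iC in simp_all)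
  thus "sub y x \<in> I" using i(1) by simp
qed

lemma cs_eq_iff: assumes x: "x \<in> Cr" and y: "y \<in> Cr" shows "cs x = cs y \<longleftrightarrow> sub x y \<in> I"
proof
  assume "cs x = cs y"
  hence "x \<in> cs y" using self_cs[OF x] by simp
  thus "sub x y \<in> I" using cs_sub[OF y] by blast
next
  assume d: "sub x y \<in> I"
  have d2: "sub y x \<in> I"
  proof -
    have "sm (-1) (sub x y) \<in> I" using id_sm[OF Iid d] .
    thus ?thesis using neg_sub[OF x y] by simp
  qed
  have incl: "cs a \<subseteq> cs b" if a: "a \<in> Cr" and b: "b \<in> Cr" and ab: "sub a b \<in> I" for a b
  proof
    fix w assume "w \<in> cs a"
    then obtain i where i: "i \<in> I" "w = add a i" using cs_mem by blast
    have iC: "i \<in> Cr" using IC i(1) .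
    have e: "add b (sub a b) = a" using a b by (rule add_sub_cancel)
    have "add b (add (sub a b) i) = add (add b (sub a b)) i" using a b iC by (simp add: add_assoc)
    hence "w = add b (add (sub a b) i)" using i(2) e by simp
    moreover have "add (sub a b) i \<in> I" using id_add[OF Iid ab i(1)] .
    ultimately show "w \<in> cs b" using cs_mem by blast
  qed
  show "cs x = cs y" using incl[OF x y d] incl[OF y x d2] by blast
qed

lemma rep_cs: assumes x: "x \<in> Cr" shows "rep_l (cs x) \<in> Cr" "sub (rep_l (cs x)) x \<in> I"
proof -
  have "rep_l (cs x) \<in> cs x" unfolding rep_l_def using self_cs[OF x] by (rule someI)
  thus "rep_l (cs x) \<in> Cr" "sub (rep_l (cs x)) x \<in> I" using cs_sub[OF x] by auto
qed

lemma qadd: assumes "x \<in> Cr" "y \<in> Cr" shows "ladd (quot_alg A I) (cs x) (cs y) = cs (add x y)"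
proof -
  let ?r = "rep_l (cs x)" and ?s = "rep_l (cs y)"
  have r: "?r \<in> Cr" "sub ?r x \<in> I" "?s \<in> Cr" "sub ?s y \<in> I" using rep_cs assms by auto
  have "sub (add ?r ?s) (add x y) = add (sub ?r x) (sub ?s y)" using r assms by (simp add: sub_add_add)
  hence "sub (add ?r ?s) (add x y) \<in> I" using id_add[OF Iid r(2) r(4)] by simp
  thus ?thesis using cs_eq_iff r assms by simp
qed

lemma qsm: assumes "x \<in> Cr" shows "lsmult (quot_alg A I) c (cs x) = cs (sm c x)"
proof -
  let ?r = "rep_l (cs x)"
  have r: "?r \<in> Cr" "sub ?r x \<in> I" using rep_cs assms by auto
  have "sub (sm c ?r) (sm c x) = sm c (sub ?r x)" using r assms by (simp add: sm_sub)
  hence "sub (sm c ?r) (sm c x) \<in> I" using id_sm[OF Iid r(2)] by simp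
  thus ?thesis using cs_eq_iff r assms by simp
qed

lemma qmul: assumes "x \<in> Cr" "y \<in> Cr" shows "lmult (quot_alg A I) (cs x) (cs y) = cs (mul x y)"
proof -
  let ?r = "rep_l (cs x)" and ?s = "rep_l (cs y)"
  have r: "?r \<in> Cr" "sub ?r x \<in> I" "?s \<in> Cr" "sub ?s y \<in> I" using rep_cs assms by auto
  have "sub (mul ?r ?s) (mul x y) = add (sub (mul ?r ?s) (mul x ?s)) (sub (mul x ?s) (mul x y))"
    using r assms by (intro sub_trans) simp_all
  also have "\<dots> = add (mul (sub ?r x) ?s) (mul x (sub ?s y))" using r assms by (simp add: mul_sub_l mul_sub_r)
  finally have "sub (mul ?r ?s) (mul x y) \<in> I"
    using id_add[OF Iid id_mr[OF Iid r(3) r(2)] id_ml[OF Iid assms(1) r(4)]] by simp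
  thus ?thesis using cs_eq_iff r assms by simp
qed

lemma qst: assumes "x \<in> Cr" shows "lstar (quot_alg A I) (cs x) = cs (st x)"
proof -
  let ?r = "rep_l (cs x)"
  have r: "?r \<in> Cr" "sub ?r x \<in> I" using rep_cs assms by auto
  have "sub (st ?r) (st x) = st (sub ?r x)" using r assms by (simp add: st_sub)
  moreover have "st (sub ?r x) \<in> I" using Ist r(2) by blast
  ultimately have "sub (st ?r) (st x) \<in> I" by simp
  thus ?thesis using cs_eq_iff r assms by simp
qed

lemma qsub: assumes "x \<in> Cr" "y \<in> Cr" shows "lsub (quot_alg A I) (cs x) (cs y) = cs (sub x y)"
  unfolding lsub_def using assms by (simp only: qsm qadd sm_closed)

lemma inf_cs: assumes p: "p \<in> Sm" and k: "k \<in> K" shows "Inf (p ` cs k) = p k"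
proof (rule cInf_eq_minimum)
  have kC: "k \<in> Cr" using KC k .
  show "p k \<in> p ` cs k" using self_cs[OF kC] by blast
  fix v assume "v \<in> p ` cs k"
  then obtain w where w: "w \<in> cs k" "v = p w" by blast
  then obtain i where i: "i \<in> I" "w = add k i" using cs_mem by blast
  have "p k \<le> p (add i k)" using orthIK[OF p i(1) k] by blast
  also have "add i k = w" using i kC IC[OF i(1)] add_comm by simp
  finally show "p k \<le> v" using w by simp
qed

end


lemma prod_simps[simp]:
  "lcarrier (prod_alg B C) = lcarrier B \<times> lcarrier C"
  "lzero (prod_alg B C) = (lzero B, lzero C)"
  "ladd (prod_alg B C) u v = (ladd B (fst u) (fst v), ladd C (snd u) (snd v))"
  "lsmult (prod_alg B C) c u = (lsmult B c (fst u), lsmult C c (snd u))"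
  "lmult (prod_alg B C) u v = (lmult B (fst u) (fst v), lmult C (snd u) (snd v))"
  "lstar (prod_alg B C) u = (lstar B (fst u), lstar C (snd u))"
  "lsemis (prod_alg B C) = {(\<lambda>z. p (fst z)) | p. p \<in> lsemis B} \<union> {(\<lambda>z. q (snd z)) | q. q \<in> lsemis C}"
  unfolding prod_alg_def by simp_all

lemma prod_sub: "lsub (prod_alg B C) u v = (lsub B (fst u) (fst v), lsub C (snd u) (snd v))"
  unfolding lsub_def by simp

context SPL
begin

lemma swap: "SPL A K I"
proof -
  have "sumset A K I = Cr"
  proof -
    have "sumset A K I = sumset A I K" unfolding sumset_def
    proof (intro Collect_cong iffI)
      fix x assume "\<exists>j k. x = add j k \<and> j \<in> K \<and> k \<in> I"
      then obtain j k where jk: "x = add j k" "j \<in> K" "k \<in> I" by blast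
      hence "x = add k j" using add_comm KC IC by simp
      thus "\<exists>j k. x = add j k \<and> j \<in> I \<and> k \<in> K" using jk by blast
    next
      fix x assume "\<exists>j k. x = add j k \<and> j \<in> I \<and> k \<in> K"
      then obtain j k where jk: "x = add j k" "j \<in> I" "k \<in> K" by blast
      hence "x = add k j" using add_comm KC IC by simp
      thus "\<exists>j k. x = add j k \<and> j \<in> K \<and> k \<in> I" using jk by blast
    qed
    thus ?thesis using sumIK by simp
  qed
  moreover have "K \<inter> I = {z}" using capIK by blast
  ultimately show ?thesis
    unfolding SPL_def SPL_axioms_def
    using LCA_axioms Kid Kcl Kst Iid Icl Ist IK KI by blast
qed

lemma iso_quot: "ISO (sub_alg A K) (quot_alg A I) cs"
proof -
  interpret KS: SPL A K I by (rule swap)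
  have lcK: "LC (sub_alg A K)" unfolding LC_def using KS.alc_sub unfolding annihilator_locally_cstar_def by blast
  have inj: "inj_on cs K"
  proof
    fix k k' assume k: "k \<in> K" "k' \<in> K" and e: "cs k = cs k'"
    have C: "k \<in> Cr" "k' \<in> Cr" using k KC by auto
    have "sub k k' \<in> I" using cs_eq_iff C e by simp
    moreover have "sub k k' \<in> K" using id_subt[OF Kid k] .
    ultimately have "sub k k' = z" using capIK by blast
    thus "k = k'" using sub_eq_zero C by blast
  qed
  have csK: "cs x = cs (sub x i)" if "x \<in> Cr" "i \<in> I" for x i
  proof -
    have iC: "i \<in> Cr" using IC that(2) .
    have "sub x (sub x i) = i"
    proof -
      have e: "add (sub x i) i = x" using that(1) iC by (rule sub_add_cancel)
      show ?thesis by (rule sub_add_eq[OF _ _ _ e, symmetric]) (use iC that(1) in simp_all)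
    qed
    thus ?thesis using cs_eq_iff that(1) iC that(2) by simp
  qed
  have imgK: "cs ` K = cs ` Cr"
  proof
    show "cs ` K \<subseteq> cs ` Cr" using KC by blast
    show "cs ` Cr \<subseteq> cs ` K"
    proof
      fix X assume "X \<in> cs ` Cr"
      then obtain x where x: "x \<in> Cr" "X = cs x" by blast
      obtain i k where s: "i \<in> I" "k \<in> K" "x = add i k" using split[OF x(1)] by blast
      have "k = sub x i" by (rule sub_add_eq) (use s IC KC x in simp_all)
      hence "X = cs k" using csK[OF x(1) s(1)] x(2) by simp
      thus "X \<in> cs ` K" using s(2) by blast
    qed
  qed
  show ?thesis unfolding ISO_def ISO_axioms_def
  proof (intro conjI allI impI ballI)
    show "LC (sub_alg A K)" by (rule lcK)
    show "bij_betw cs (lcarrier (sub_alg A K)) (lcarrier (quot_alg A I))"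
      unfolding bij_betw_def using inj imgK by simp
    show "cs (lzero (sub_alg A K)) = lzero (quot_alg A I)" by simp
  next
    fix x y assume "x \<in> lcarrier (sub_alg A K)" "y \<in> lcarrier (sub_alg A K)"
    hence C: "x \<in> Cr" "y \<in> Cr" using KC by auto
    show "cs (ladd (sub_alg A K) x y) = ladd (quot_alg A I) (cs x) (cs y)" using qadd[OF C] by simp
    show "cs (lmult (sub_alg A K) x y) = lmult (quot_alg A I) (cs x) (cs y)" using qmul[OF C] by simp
  next
    fix c x assume "x \<in> lcarrier (sub_alg A K)"
    hence C: "x \<in> Cr" using KC by auto
    show "cs (lsmult (sub_alg A K) c x) = lsmult (quot_alg A I) c (cs x)" using qsm[OF C] by simp
  next
    fix x assume "x \<in> lcarrier (sub_alg A K)"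
    hence C: "x \<in> Cr" using KC by auto
    show "cs (lstar (sub_alg A K) x) = lstar (quot_alg A I) (cs x)" using qst[OF C] by simp
  next
    fix p assume p: "p \<in> lsemis (sub_alg A K)"
    hence pS: "p \<in> Sm" by simp
    have q: "(\<lambda>X. Inf (p ` X)) \<in> lsemis (quot_alg A I)" using pS by auto
    have h: "\<forall>x\<in>lcarrier (sub_alg A K). Inf (p ` cs x) = p x" using inf_cs[OF pS] by simp
    show "\<exists>q\<in>lsemis (quot_alg A I). \<forall>x\<in>lcarrier (sub_alg A K). q (cs x) = p x"
    proof (rule bexI[OF _ q])
      show "\<forall>x\<in>lcarrier (sub_alg A K). Inf (p ` cs x) = p x" using h .
    qed
  next
    fix q assume "q \<in> lsemis (quot_alg A I)"
    then obtain p where p: "p \<in> Sm" "q = (\<lambda>X. Inf (p ` X))" by auto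
    have "\<forall>x\<in>lcarrier (sub_alg A K). q (cs x) = p x" using inf_cs[OF p(1)] p(2) by simp
    thus "\<exists>p\<in>lsemis (sub_alg A K). \<forall>x\<in>lcarrier (sub_alg A K). q (cs x) = p x" using p(1) by auto
  qed
qed

lemma alc_quot: "annihilator_locally_cstar (quot_alg A I)"
proof -
  interpret KS: SPL A K I by (rule swap)
  interpret Q: ISO "sub_alg A K" "quot_alg A I" cs by (rule iso_quot)
  have "annihilator_alg (sub_alg A K)" using KS.alc_sub unfolding annihilator_locally_cstar_def by blast
  thus ?thesis unfolding annihilator_locally_cstar_def using Q.lc_C Q.ann_C by blast
qed

end


context SPL
begin

definition dI :: "'a \<Rightarrow> 'a" where "dI x = (SOME i. i \<in> I \<and> (\<exists>k\<in>K. x = add i k))"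

lemma dI_ex: assumes "x \<in> Cr" shows "dI x \<in> I" "\<exists>k\<in>K. x = add (dI x) k"
proof -
  obtain i k where s: "i \<in> I" "k \<in> K" "x = add i k" using split[OF assms] by blast
  have "\<exists>i. i \<in> I \<and> (\<exists>k\<in>K. x = add i k)" using s by blast
  hence "dI x \<in> I \<and> (\<exists>k\<in>K. x = add (dI x) k)" unfolding dI_def by (rule someI_ex)
  thus "dI x \<in> I" "\<exists>k\<in>K. x = add (dI x) k" by auto
qed

lemma dI_eq: assumes "i \<in> I" "k \<in> K" shows "dI (add i k) = i"
proof -
  have x: "add i k \<in> Cr" using assms IC KC by simp
  obtain k' where k': "k' \<in> K" "add i k = add (dI (add i k)) k'" using dI_ex[OF x] by blast
  show ?thesis using split_unique[OF dI_ex(1)[OF x] k'(1) assms] k'(2) by simp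
qed

definition dK :: "'a \<Rightarrow> 'a" where "dK x = sub x (dI x)"

lemma dK_props: assumes x: "x \<in> Cr" shows "dK x \<in> K" "x = add (dI x) (dK x)"
proof -
  obtain k where k: "k \<in> K" "x = add (dI x) k" using dI_ex[OF x] by blast
  have C: "dI x \<in> Cr" "k \<in> Cr" using dI_ex(1)[OF x] k(1) IC KC by auto
  have "k = sub x (dI x)" by (rule sub_add_eq[OF C(1) C(2) x k(2)[symmetric]])
  thus "dK x \<in> K" "x = add (dI x) (dK x)" unfolding dK_def using k by auto
qed

lemma dI_C: "x \<in> Cr \<Longrightarrow> dI x \<in> Cr" using dI_ex(1) IC by blast
lemma dK_C: "x \<in> Cr \<Longrightarrow> dK x \<in> Cr" using dK_props(1) KC by blast

lemma dI_add: assumes x: "x \<in> Cr" and y: "y \<in> Cr" shows "dI (add x y) = add (dI x) (dI y)"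
proof -
  have C: "dI x \<in> Cr" "dK x \<in> Cr" "dI y \<in> Cr" "dK y \<in> Cr" using dI_C dK_C x y by auto
  have "add x y = add (add (dI x) (dI y)) (add (dK x) (dK y))"
    using dK_props(2)[OF x] dK_props(2)[OF y] C add_swap4[OF C(1,2,3,4)] by simp
  moreover have "add (dI x) (dI y) \<in> I" using id_add[OF Iid dI_ex(1)[OF x] dI_ex(1)[OF y]] .
  moreover have "add (dK x) (dK y) \<in> K" using id_add[OF Kid dK_props(1)[OF x] dK_props(1)[OF y]] .
  ultimately show ?thesis using dI_eq by simp
qed

lemma dI_sm: assumes x: "x \<in> Cr" shows "dI (sm c x) = sm c (dI x)"
proof -
  have C: "dI x \<in> Cr" "dK x \<in> Cr" using dI_C dK_C x by auto
  have "sm c x = add (sm c (dI x)) (sm c (dK x))" using dK_props(2)[OF x] C sm_add by metis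
  moreover have "sm c (dI x) \<in> I" using id_sm[OF Iid dI_ex(1)[OF x]] .
  moreover have "sm c (dK x) \<in> K" using id_sm[OF Kid dK_props(1)[OF x]] .
  ultimately show ?thesis using dI_eq by simp
qed

lemma dI_mul: assumes x: "x \<in> Cr" and y: "y \<in> Cr" shows "dI (mul x y) = mul (dI x) (dI y)"
proof -
  let ?a = "dI x" and ?b = "dK x" and ?c = "dI y" and ?d = "dK y"
  have I: "?a \<in> I" "?c \<in> I" using dI_ex(1) x y by auto
  have K: "?b \<in> K" "?d \<in> K" using dK_props(1) x y by auto
  have C: "?a \<in> Cr" "?b \<in> Cr" "?c \<in> Cr" "?d \<in> Cr" using dI_C dK_C x y by auto
  have "mul x y = mul (add ?a ?b) (add ?c ?d)" using dK_props(2)[OF x] dK_props(2)[OF y] by simp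
  also have "\<dots> = add (add (mul ?a ?c) (mul ?b ?c)) (add (mul ?a ?d) (mul ?b ?d))"
    using C by (simp add: distr_l distr_r)
  also have "mul ?a ?d = z" using IK[OF I(1) K(2)] .
  also have "mul ?b ?c = z" using KI[OF I(2) K(1)] .
  finally have "mul x y = add (mul ?a ?c) (mul ?b ?d)" using C by simp
  moreover have "mul ?a ?c \<in> I" using id_ml[OF Iid C(1) I(2)] .
  moreover have "mul ?b ?d \<in> K" using id_ml[OF Kid C(2) K(2)] .
  ultimately show ?thesis using dI_eq by simp
qed

lemma dI_st: assumes x: "x \<in> Cr" shows "dI (st x) = st (dI x)"
proof -
  have C: "dI x \<in> Cr" "dK x \<in> Cr" using dI_C dK_C x by auto
  have "st x = add (st (dI x)) (st (dK x))" using dK_props(2)[OF x] C st_add by metis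
  moreover have "st (dI x) \<in> I" using Ist dI_ex(1)[OF x] by blast
  moreover have "st (dK x) \<in> K" using Kst dK_props(1)[OF x] by blast
  ultimately show ?thesis using dI_eq by simp
qed

lemma dI_sub: assumes x: "x \<in> Cr" and y: "y \<in> Cr" shows "dI (sub x y) = sub (dI x) (dI y)"
  unfolding lsub_def using assms by (simp add: dI_add dI_sm)

lemma cs_dK: assumes x: "x \<in> Cr" shows "cs x = cs (dK x)"
proof -
  have C: "dI x \<in> Cr" "dK x \<in> Cr" using dI_C dK_C x by auto
  have e: "add (dK x) (dI x) = x" using dK_props(2)[OF x] add_comm C by simp
  have "dI x = sub x (dK x)" by (rule sub_add_eq[OF C(2) C(1) x e])
  hence "sub x (dK x) \<in> I" using dI_ex(1)[OF x] by simp
  thus ?thesis using cs_eq_iff x C(2) by simp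
qed

lemma p_dI: assumes p: "p \<in> Sm" and x: "x \<in> Cr" shows "p (dI x) \<le> p x" "p (dK x) \<le> p x"
  using orthIK[OF p dI_ex(1)[OF x] dK_props(1)[OF x]] dK_props(2)[OF x] by auto

lemma inf_dK: assumes p: "p \<in> Sm" and x: "x \<in> Cr" shows "Inf (p ` cs x) = p (dK x)"
  using cs_dK[OF x] inf_cs[OF p dK_props(1)[OF x]] by simp

definition phi :: "'a \<Rightarrow> 'a \<times> 'a set" where "phi x = (dI x, cs x)"

lemma phi_bij: "bij_betw phi Cr (I \<times> cs ` Cr)"
  unfolding bij_betw_def
proof
  show "inj_on phi Cr"
  proof
    fix x y assume x: "x \<in> Cr" and y: "y \<in> Cr" and e: "phi x = phi y"
    have e1: "dI x = dI y" and e2: "cs x = cs y" using e unfolding phi_def by auto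
    have d: "sub x y \<in> I" using cs_eq_iff x y e2 by simp
    have "dI (sub x y) = z" using dI_sub[OF x y] e1 dI_C[OF y] by simp
    hence "sub x y = dK (sub x y)" using dK_props(2)[of "sub x y"] x y dK_C[of "sub x y"] by simp
    hence "sub x y \<in> K" using dK_props(1)[of "sub x y"] x y by simp
    hence "sub x y = z" using d capIK by blast
    thus "x = y" using sub_eq_zero x y by blast
  qed
  show "phi ` Cr = I \<times> cs ` Cr"
  proof
    show "phi ` Cr \<subseteq> I \<times> cs ` Cr" unfolding phi_def using dI_ex(1) by blast
    show "I \<times> cs ` Cr \<subseteq> phi ` Cr"
    proof
      fix w assume "w \<in> I \<times> cs ` Cr"
      then obtain i x where w: "i \<in> I" "x \<in> Cr" "w = (i, cs x)" by blast
      let ?y = "add i (dK x)"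
      have yC: "?y \<in> Cr" using IC[OF w(1)] dK_C[OF w(2)] by simp
      have dy: "dI ?y = i" using dI_eq[OF w(1) dK_props(1)[OF w(2)]] .
      have "sub ?y i = dK x"
        by (rule sub_add_eq[symmetric]) (use IC[OF w(1)] dK_C[OF w(2)] in simp_all)
      hence "dK ?y = dK x" using dy unfolding dK_def[of ?y] by simp
      hence "cs ?y = cs x" using cs_dK[OF yC] cs_dK[OF w(2)] by simp
      hence "phi ?y = w" unfolding phi_def using dy w(3) by simp
      thus "w \<in> phi ` Cr" using yC by blast
    qed
  qed
qed

end


lemma two_sum: assumes "q1 v \<ge> (0::real)" "q2 v \<ge> 0"
  shows "q1 v + q2 v \<le> 2 * (\<Sum>q\<in>{q1, q2}. q v)"
proof (cases "q1 = q2")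
  case True thus ?thesis by simp
next
  case False thus ?thesis using assms by simp
qed

context SPL
begin

abbreviation "PP \<equiv> prod_alg (sub_alg A I) (quot_alg A I)"

lemma phi_sub: assumes x: "x \<in> Cr" and y: "y \<in> Cr"
  shows "lsub PP (phi y) (phi x) = (dI (sub y x), cs (sub y x))"
  unfolding prod_sub phi_def using dI_sub[OF y x] qsub[OF y x] by simp

lemma top_iso: "top_star_iso A PP phi"
  unfolding top_star_iso_def
proof (intro conjI ballI allI)
  show "bij_betw phi Cr (lcarrier PP)" using phi_bij by simp
  fix x assume x: "x \<in> Cr"
  { fix y assume y: "y \<in> Cr"
    show "phi (add x y) = ladd PP (phi x) (phi y)" unfolding phi_def using dI_add[OF x y] qadd[OF x y] by simp
    show "phi (mul x y) = lmult PP (phi x) (phi y)" unfolding phi_def using dI_mul[OF x y] qmul[OF x y] by simp }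
  { fix c show "phi (sm c x) = lsmult PP c (phi x)" unfolding phi_def using dI_sm[OF x] qsm[OF x] by simp }
  show "phi (st x) = lstar PP (phi x)" unfolding phi_def using dI_st[OF x] qst[OF x] by simp
next
  show "homeomorphic_map (lcs_topology A) (lcs_topology PP) phi"
  proof (rule homeo_est)
    show "bij_betw phi Cr (lcarrier PP)" using phi_bij by simp
    show "\<forall>q\<in>lsemis PP. \<exists>F. finite F \<and> F \<subseteq> Sm \<and>
        (\<forall>x\<in>Cr. \<forall>y\<in>Cr. q (lsub PP (phi y) (phi x)) \<le> 2 * (\<Sum>p\<in>F. p (sub y x)))"
    proof
      fix q assume "q \<in> lsemis PP"
      hence "(\<exists>p. q = (\<lambda>z. p (fst z)) \<and> p \<in> Sm) \<or> (\<exists>Q. q = (\<lambda>z. Q (snd z)) \<and> Q \<in> lsemis (quot_alg A I))"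
        by simp
      then obtain p where p: "p \<in> Sm" and
        qp: "\<forall>x\<in>Cr. \<forall>y\<in>Cr. q (lsub PP (phi y) (phi x)) \<le> p (sub y x)"
      proof (elim disjE exE conjE)
        fix p assume q: "q = (\<lambda>z. p (fst z))" and p: "p \<in> Sm"
        have "\<forall>x\<in>Cr. \<forall>y\<in>Cr. q (lsub PP (phi y) (phi x)) \<le> p (sub y x)"
          using phi_sub p_dI(1)[OF p] unfolding q by simp
        thus thesis using that p by blast
      next
        fix Q assume q: "q = (\<lambda>z. Q (snd z))" and Q: "Q \<in> lsemis (quot_alg A I)"
        then obtain p where p: "p \<in> Sm" "Q = (\<lambda>X. Inf (p ` X))" by auto
        have "\<forall>x\<in>Cr. \<forall>y\<in>Cr. q (lsub PP (phi y) (phi x)) \<le> p (sub y x)"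
          using phi_sub inf_dK[OF p(1)] p_dI(2)[OF p(1)] unfolding q p(2) by simp
        thus thesis using that p by blast
      qed
      have "\<forall>x\<in>Cr. \<forall>y\<in>Cr. q (lsub PP (phi y) (phi x)) \<le> 2 * (\<Sum>p\<in>{p}. p (sub y x))"
      proof (intro ballI)
        fix x y assume x: "x \<in> Cr" and y: "y \<in> Cr"
        have a: "q (lsub PP (phi y) (phi x)) \<le> p (sub y x)" using qp x y by blast
        have "p (sub y x) \<ge> 0" using p_nonneg[OF p] x y by simp
        thus "q (lsub PP (phi y) (phi x)) \<le> 2 * (\<Sum>p\<in>{p}. p (sub y x))" using a by simp
      qed
      thus "\<exists>F. finite F \<and> F \<subseteq> Sm \<and> (\<forall>x\<in>Cr. \<forall>y\<in>Cr. q (lsub PP (phi y) (phi x)) \<le> 2 * (\<Sum>p\<in>F. p (sub y x)))"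
        using p by (intro exI[of _ "{p}"]) simp
    qed
    show "\<forall>p\<in>Sm. \<exists>G. finite G \<and> G \<subseteq> lsemis PP \<and>
        (\<forall>x\<in>Cr. \<forall>y\<in>Cr. p (sub y x) \<le> 2 * (\<Sum>q\<in>G. q (lsub PP (phi y) (phi x))))"
    proof
      fix p assume p: "p \<in> Sm"
      define q1 :: "'a \<times> 'a set \<Rightarrow> real" where "q1 = (\<lambda>w. p (fst w))"
      define q2 :: "'a \<times> 'a set \<Rightarrow> real" where "q2 = (\<lambda>w. Inf (p ` snd w))"
      have G: "{q1, q2} \<subseteq> lsemis PP"
      proof -
        have "q1 \<in> lsemis PP" unfolding q1_def using p by auto
        moreover have "(\<lambda>X. Inf (p ` X)) \<in> lsemis (quot_alg A I)" using p by auto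
        hence "q2 \<in> lsemis PP" unfolding q2_def by auto
        ultimately show ?thesis by blast
      qed
      have "\<forall>x\<in>Cr. \<forall>y\<in>Cr. p (sub y x) \<le> 2 * (\<Sum>q\<in>{q1, q2}. q (lsub PP (phi y) (phi x)))"
      proof (intro ballI)
        fix x y assume x: "x \<in> Cr" and y: "y \<in> Cr"
        let ?w = "sub y x" and ?v = "lsub PP (phi y) (phi x)"
        have w: "?w \<in> Cr" using x y by simp
        have v1: "q1 ?v = p (dI ?w)" unfolding q1_def using phi_sub[OF x y] by simp
        have v2: "q2 ?v = p (dK ?w)" unfolding q2_def using phi_sub[OF x y] inf_dK[OF p w] by simp
        have "p ?w \<le> p (dI ?w) + p (dK ?w)"
          using p_add[OF p dI_C[OF w] dK_C[OF w]] dK_props(2)[OF w] by simp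
        also have "\<dots> = q1 ?v + q2 ?v" using v1 v2 by simp
        also have "\<dots> \<le> 2 * (\<Sum>q\<in>{q1, q2}. q ?v)"
          by (rule two_sum) (use v1 v2 p_nonneg[OF p dI_C[OF w]] p_nonneg[OF p dK_C[OF w]] in simp_all)
        finally show "p ?w \<le> 2 * (\<Sum>q\<in>{q1, q2}. q ?v)" .
      qed
      thus "\<exists>G. finite G \<and> G \<subseteq> lsemis PP \<and> (\<forall>x\<in>Cr. \<forall>y\<in>Cr. p (sub y x) \<le> 2 * (\<Sum>q\<in>G. q (lsub PP (phi y) (phi x))))"
        using G by (intro exI[of _ "{q1, q2}"]) simp
    qed
  qed
qed

end

theorem proposition3p26:
  fixes A :: "'a lcs_alg" and I :: "'a set"
  assumes "annihilator_locally_cstar A"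
    and "closed_ideal A I"
  shows "annihilator_locally_cstar (sub_alg A I) \<and>
         annihilator_locally_cstar (quot_alg A I) \<and>
         (\<exists>f. top_star_iso A (prod_alg (sub_alg A I) (quot_alg A I)) f)"
proof -
  interpret LCA A using assms(1) unfolding annihilator_locally_cstar_def LCA_def LCA_axioms_def LC_def by blast
  have I: "ideal2 A I" "closedin (lcs_topology A) I" using assms(2) closed_ideal_iff by auto
  have Ist: "st ` I \<subseteq> I" by (rule selfadj[OF I])
  let ?K = "lan A I"
  have IC: "I \<subseteq> Cr" using id_C[OF I(1)] by blast
  have spl: "SPL A I ?K"
    unfolding SPL_def SPL_axioms_def
  proof (intro conjI allI impI)
    show "LCA A" by (rule LCA_axioms)
    show "ideal2 A I" "closedin (lcs_topology A) I" "st ` I \<subseteq> I" using I Ist by auto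
    show "ideal2 A ?K" by (rule lan_ideal[OF I(1)])
    show "closedin (lcs_topology A) ?K" by (rule lan_closed[OF IC])
    show "st ` ?K \<subseteq> ?K" by (rule lan_st[OF I(1) Ist])
    show "sumset A I ?K = Cr" by (rule decomp[OF I Ist])
    show "I \<inter> ?K = {z}" by (rule lan_inter[OF I(1) Ist])
  next
    fix i k assume "i \<in> I" "k \<in> ?K"
    thus "mul i k = z" using lan_sub_ran[OF I(1) Ist] unfolding ran_def by blast
  next
    fix i k assume "i \<in> I" "k \<in> ?K"
    thus "mul k i = z" unfolding lan_def by blast
  qed
  interpret S: SPL A I ?K by (rule spl)
  show ?thesis using S.alc_sub S.alc_quot S.top_iso by blast
qed


end
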